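(* Let $N$ be a compact $k$-dimensional submanifold of the unit sphere $S^{q-1}\subset\mathbb R^q$, with $k>4$, and let $\mathsf B_1$ be the second fundamental form of $N$ in $S^{q-1}$. If $\|\mathsf B_1\|^2<\frac{k-4}{\sqrt k+4}$ at every point of $N$, then $N$ is $\Phi$-SSU.
   Context: $\|\mathsf B_1\|^2=\sum_{i,j=1}^k|\mathsf B_1(\mathsf e_i,\mathsf e_j)|^2$ for an orthonormal basis $\{\mathsf e_i\}$ of the tangent space. A Riemannian $k$-manifold $N$ is $\Phi$-SSU if there is an isometric immersion $N\to\mathbb R^{Q}$ with second fundamental form $\mathsf B$ such that for every $y\in N$ and every unit $\mathsf x\in T_yN$, $\sum_{\beta=1}^k\big(4|\mathsf B(\mathsf x,\mathsf e_\beta)|^2-\langle \mathsf B(\mathsf x,\mathsf x),\mathsf B(\mathsf e_\beta,\mathsf e_\beta)\rangle\big)<0$, where $\{\mathsf e_\beta\}$ is an orthonormal basis of $T_yN$. *)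

theory Defs
  imports "HOL-Analysis.Analysis"
begin

primrec Ck_on :: "nat \<Rightarrow> ('a::real_normed_vector \<Rightarrow> 'b::real_normed_vector) \<Rightarrow> 'a set \<Rightarrow> bool" where
  "Ck_on 0 f U = continuous_on U f"
| "Ck_on (Suc n) f U =
     (\<exists>f'. (\<forall>u\<in>U. (f has_derivative f' u) (at u)) \<and> (\<forall>v. Ck_on n (\<lambda>u. f' u v) U))"

definition smooth_on :: "('a::real_normed_vector \<Rightarrow> 'b::real_normed_vector) \<Rightarrow> 'a set \<Rightarrow> bool" where
  "smooth_on f U \<longleftrightarrow> (\<forall>n. Ck_on n f U)"

definition is_chart :: "(real^'q) set \<Rightarrow> (real^'k::finite) set \<Rightarrow> (real^'k \<Rightarrow> real^'q) \<Rightarrow> bool" where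
  "is_chart N U \<phi> \<longleftrightarrow> open U \<and> smooth_on \<phi> U \<and>
     (\<forall>u\<in>U. inj (frechet_derivative \<phi> (at u))) \<and>
     (\<exists>W \<psi>. open W \<and> homeomorphism U (N \<inter> W) \<phi> \<psi>)"

definition submanifold :: "'k::finite itself \<Rightarrow> (real^'q) set \<Rightarrow> bool" where
  "submanifold (_::'k::finite itself) N \<longleftrightarrow>
     (\<forall>p\<in>N. \<exists>(U::(real^'k) set) \<phi>. is_chart N U \<phi> \<and> p \<in> \<phi> ` U)"

definition tangent_space :: "'k::finite itself \<Rightarrow> (real^'q) set \<Rightarrow> real^'q \<Rightarrow> (real^'q) set" where
  "tangent_space (_::'k::finite itself) N y =
     {X. \<exists>(U::(real^'k) set) \<phi> u v. is_chart N U \<phi> \<and> u \<in> U \<and> \<phi> u = y \<and>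
          X = frechet_derivative \<phi> (at u) v}"

definition d2 :: "('a::real_normed_vector \<Rightarrow> 'b::real_normed_vector) \<Rightarrow> 'a \<Rightarrow> 'a \<Rightarrow> 'a \<Rightarrow> 'b" where
  "d2 f u v w = frechet_derivative (\<lambda>u'. frechet_derivative f (at u') v) (at u) w"

definition sff_R :: "'k::finite itself \<Rightarrow> (real^'q) set \<Rightarrow> real^'q \<Rightarrow> real^'q \<Rightarrow> real^'q \<Rightarrow> real^'q" where
  "sff_R K N y X Y = (SOME b. \<exists>(U::(real^'k) set) \<phi> u v w.
      is_chart N U \<phi> \<and> u \<in> U \<and> \<phi> u = y \<and>
      frechet_derivative \<phi> (at u) v = X \<and> frechet_derivative \<phi> (at u) w = Y \<and>
      b = d2 \<phi> u v w - closest_point (tangent_space K N y) (d2 \<phi> u v w))"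

text \<open>Second fundamental form B_1 of N (contained in the unit sphere) in S^{q-1}:
  the component of the Euclidean one tangent to the sphere at y.\<close>
definition sff_S :: "'k::finite itself \<Rightarrow> (real^'q) set \<Rightarrow> real^'q \<Rightarrow> real^'q \<Rightarrow> real^'q \<Rightarrow> real^'q" where
  "sff_S K N y X Y = sff_R K N y X Y - (sff_R K N y X Y \<bullet> y) *\<^sub>R y"

definition onb :: "'k::finite itself \<Rightarrow> (real^'q) set \<Rightarrow> real^'q \<Rightarrow> ('k \<Rightarrow> real^'q) \<Rightarrow> bool" where
  "onb K N y e \<longleftrightarrow> (\<forall>i. e i \<in> tangent_space K N y) \<and>
     (\<forall>i j. e i \<bullet> e j = (if i = j then 1 else 0)) \<and>
     span (range e) = tangent_space K N y"

definition sqnorm_sff_S :: "'k::finite itself \<Rightarrow> (real^'q) set \<Rightarrow> real^'q \<Rightarrow> ('k \<Rightarrow> real^'q) \<Rightarrow> real" where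
  "sqnorm_sff_S K N y e = (\<Sum>i\<in>UNIV. \<Sum>j\<in>UNIV. (norm (sff_S K N y (e i) (e j)))\<^sup>2)"

text \<open>A vector of R^Q is represented as a function nat => real vanishing from index Q on;
  a map F : N -> R^Q is represented as F :: real^'q => nat => real.\<close>

definition innerQ :: "nat \<Rightarrow> (nat \<Rightarrow> real) \<Rightarrow> (nat \<Rightarrow> real) \<Rightarrow> real" where
  "innerQ Q a b = (\<Sum>i<Q. a i * b i)"

definition dF :: "nat \<Rightarrow> (real^'q \<Rightarrow> nat \<Rightarrow> real) \<Rightarrow> (real^'k \<Rightarrow> real^'q) \<Rightarrow> real^'k \<Rightarrow> real^'k \<Rightarrow> nat \<Rightarrow> real" where
  "dF Q F \<phi> u v = (\<lambda>i. if i < Q then frechet_derivative (\<lambda>u'. F (\<phi> u') i) (at u) v else 0)"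

definition d2F :: "nat \<Rightarrow> (real^'q \<Rightarrow> nat \<Rightarrow> real) \<Rightarrow> (real^'k \<Rightarrow> real^'q) \<Rightarrow> real^'k \<Rightarrow> real^'k \<Rightarrow> real^'k \<Rightarrow> nat \<Rightarrow> real" where
  "d2F Q F \<phi> u v w = (\<lambda>i. if i < Q then d2 (\<lambda>u'. F (\<phi> u') i) u v w else 0)"

definition perpQ :: "nat \<Rightarrow> (nat \<Rightarrow> real) set \<Rightarrow> (nat \<Rightarrow> real) \<Rightarrow> nat \<Rightarrow> real" where
  "perpQ Q S z = (THE n. (\<forall>i\<ge>Q. n i = 0) \<and> (\<forall>s\<in>S. innerQ Q n s = 0) \<and> (\<lambda>i. z i - n i) \<in> S)"

definition isometric_immersion :: "'k::finite itself \<Rightarrow> (real^'q) set \<Rightarrow> nat \<Rightarrow> (real^'q \<Rightarrow> nat \<Rightarrow> real) \<Rightarrow> bool" where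
  "isometric_immersion (_::'k::finite itself) N Q F \<longleftrightarrow>
     (\<forall>y\<in>N. \<forall>i\<ge>Q. F y i = 0) \<and>
     (\<forall>(U::(real^'k) set) \<phi>. is_chart N U \<phi> \<longrightarrow>
        (\<forall>i<Q. smooth_on (\<lambda>u. F (\<phi> u) i) U) \<and>
        (\<forall>u\<in>U. \<forall>v w. innerQ Q (dF Q F \<phi> u v) (dF Q F \<phi> u w) =
                        frechet_derivative \<phi> (at u) v \<bullet> frechet_derivative \<phi> (at u) w))"

definition sff_F :: "'k::finite itself \<Rightarrow> (real^'q) set \<Rightarrow> nat \<Rightarrow> (real^'q \<Rightarrow> nat \<Rightarrow> real) \<Rightarrow> real^'q \<Rightarrow> real^'q \<Rightarrow> real^'q \<Rightarrow> nat \<Rightarrow> real" where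
  "sff_F K N Q F y X Y = (SOME b. \<exists>(U::(real^'k) set) \<phi> u v w.
      is_chart N U \<phi> \<and> u \<in> U \<and> \<phi> u = y \<and>
      frechet_derivative \<phi> (at u) v = X \<and> frechet_derivative \<phi> (at u) w = Y \<and>
      b = perpQ Q (range (dF Q F \<phi> u)) (d2F Q F \<phi> u v w))"

definition Phi_SSU :: "'k::finite itself \<Rightarrow> (real^'q) set \<Rightarrow> bool" where
  "Phi_SSU K N \<longleftrightarrow> (\<exists>Q F. isometric_immersion K N Q F \<and>
     (\<forall>y\<in>N. \<forall>x\<in>tangent_space K N y. norm x = 1 \<longrightarrow>
        (\<forall>e. onb K N y e \<longrightarrow>
          (\<Sum>\<beta>\<in>UNIV. 4 * innerQ Q (sff_F K N Q F y x (e \<beta>)) (sff_F K N Q F y x (e \<beta>))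
                     - innerQ Q (sff_F K N Q F y x x) (sff_F K N Q F y (e \<beta>) (e \<beta>))) < 0)))"

end

theory Submission
  imports Defs
begin

definition C2 :: "('a::euclidean_space \<Rightarrow> 'b::euclidean_space) \<Rightarrow> ('a \<Rightarrow> 'a \<Rightarrow> 'b) \<Rightarrow> ('a \<Rightarrow> 'a \<Rightarrow> 'a \<Rightarrow> 'b) \<Rightarrow> 'a set \<Rightarrow> bool" where
  "C2 f f' f'' U \<longleftrightarrow> open U \<and> (\<forall>u\<in>U. (f has_derivative f' u) (at u)) \<and>
     (\<forall>u\<in>U. \<forall>v. ((\<lambda>a. f' a v) has_derivative f'' u v) (at u))"

lemma smooth_C2:
  assumes "smooth_on f U" "open U"
  shows "\<exists>f' f''. C2 f f' f'' U"
proof -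
  have "Ck_on 2 f U" using assms(1) unfolding smooth_on_def by blast
  then obtain f' where f': "\<forall>u\<in>U. (f has_derivative f' u) (at u)"
    and h: "\<forall>v. Ck_on 1 (\<lambda>u. f' u v) U"
    by (auto simp: numeral_2_eq_2)
  have "\<forall>v. \<exists>g. \<forall>u\<in>U. ((\<lambda>u. f' u v) has_derivative g u) (at u)"
    using h by (metis Ck_on.simps(2) One_nat_def)
  then obtain g where g: "\<forall>v. \<forall>u\<in>U. ((\<lambda>u. f' u v) has_derivative g v u) (at u)"
    by metis
  show ?thesis
    apply (rule exI[of _ f'], rule exI[of _ "\<lambda>u v. g v u"])
    using f' g assms(2) by (auto simp: C2_def)
qed

lemma C2_fd:
  assumes "C2 f f' f'' U" "u \<in> U"
  shows "frechet_derivative f (at u) = f' u"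
  using assms frechet_derivative_at unfolding C2_def by metis

lemma C2_d2:
  assumes "C2 f f' f'' U" "u \<in> U"
  shows "d2 f u v w = f'' u v w"
proof -
  have "((\<lambda>a. frechet_derivative f (at a) v) has_derivative f'' u v) (at u)"
    apply (rule has_derivative_transform_within_open[of "\<lambda>a. f' a v" _ _ _ U])
    using assms C2_fd[OF assms(1)] unfolding C2_def by auto
  then show ?thesis unfolding d2_def using frechet_derivative_at by metis
qed

lemma C2_lin1:
  assumes "C2 f f' f'' U" "u \<in> U"
  shows "linear (f' u)"
  using assms unfolding C2_def using has_derivative_linear by blast

lemma C2_lin2:
  assumes "C2 f f' f'' U" "u \<in> U"
  shows "linear (f'' u v)"
  using assms unfolding C2_def using has_derivative_linear by blast

lemma C2_lin3:
  assumes "C2 f f' f'' U" "u \<in> U"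
  shows "linear (\<lambda>v. f'' u v w)"
proof -
  have o: "open U" using assms unfolding C2_def by auto
  have add: "f'' u (a + b) = (\<lambda>w. f'' u a w + f'' u b w)" for a b
  proof -
    have "((\<lambda>x. f' x a + f' x b) has_derivative (\<lambda>w. f'' u a w + f'' u b w)) (at u)"
      using assms unfolding C2_def by (intro has_derivative_add) auto
    then have "((\<lambda>x. f' x (a + b)) has_derivative (\<lambda>w. f'' u a w + f'' u b w)) (at u)"
      apply (rule has_derivative_transform_within_open[OF _ o assms(2)])
      using C2_lin1[OF assms(1)] by (simp add: linear_add)
    then show ?thesis using assms unfolding C2_def using has_derivative_unique by blast
  qed
  have sc: "f'' u (c *\<^sub>R a) = (\<lambda>w. c *\<^sub>R f'' u a w)" for a c
  proof -
    have "((\<lambda>x. c *\<^sub>R f' x a) has_derivative (\<lambda>w. c *\<^sub>R f'' u a w)) (at u)"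
      using assms unfolding C2_def by (intro has_derivative_scaleR_right) auto
    then have "((\<lambda>x. f' x (c *\<^sub>R a)) has_derivative (\<lambda>w. c *\<^sub>R f'' u a w)) (at u)"
      apply (rule has_derivative_transform_within_open[OF _ o assms(2)])
      using C2_lin1[OF assms(1)] by (simp add: linear_scale)
    then show ?thesis using assms unfolding C2_def using has_derivative_unique by blast
  qed
  show ?thesis by (rule linearI) (simp_all add: add sc)
qed

lemma linear_expand_bound:
  fixes g :: "'a::euclidean_space \<Rightarrow> 'b::real_normed_vector"
  assumes "linear g" "\<And>b. b \<in> Basis \<Longrightarrow> norm (g b) \<le> c"
  shows "norm (g k) \<le> real DIM('a) * c * norm k"
proof -
  have "g k = (\<Sum>b\<in>Basis. (k \<bullet> b) *\<^sub>R g b)"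
    using linear_sum[OF assms(1)] linear_scale[OF assms(1)] euclidean_representation[of k]
    by (metis (no_types, lifting) sum.cong)
  then have "norm (g k) \<le> (\<Sum>b\<in>Basis. norm ((k \<bullet> b) *\<^sub>R g b))"
    by (metis norm_sum)
  also have "\<dots> \<le> (\<Sum>b\<in>(Basis::'a set). norm k * c)"
  proof (rule sum_mono)
    fix b :: 'a assume b: "b \<in> Basis"
    have "\<bar>k \<bullet> b\<bar> \<le> norm k" using b by (simp add: Basis_le_norm)
    then show "norm ((k \<bullet> b) *\<^sub>R g b) \<le> norm k * c"
      using assms(2)[OF b] by (simp add: mult_mono')
  qed
  finally show ?thesis by (simp add: algebra_simps)
qed

lemma C2_T1:
  assumes C: "C2 f f' f'' U" and u: "u \<in> U" and e: "e > 0"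
  shows "eventually (\<lambda>a. a \<in> U \<and> (\<forall>k. norm (f' a k - f' u k - f'' u k (a - u)) \<le> e * norm (a - u) * norm k)) (nhds u)"
proof -
  define n where "n = real DIM('a)"
  have n: "n > 0" unfolding n_def by simp
  have ev: "eventually (\<lambda>a. norm (f' a b - f' u b - f'' u b (a - u)) \<le> (e / n) * norm (a - u)) (nhds u)"
    if b: "b \<in> Basis" for b
  proof -
    have "((\<lambda>a. f' a b) has_derivative f'' u b) (at u)" using C u unfolding C2_def by auto
    then obtain d where "d > 0" "\<forall>y. norm (y - u) < d \<longrightarrow> norm (f' y b - f' u b - f'' u b (y - u)) \<le> (e/n) * norm (y - u)"
      using e n unfolding has_derivative_at_alt by (meson divide_pos_pos)
    then show ?thesis unfolding eventually_nhds_metric by (metis dist_norm)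
  qed
  have "eventually (\<lambda>a. \<forall>b\<in>Basis. norm (f' a b - f' u b - f'' u b (a - u)) \<le> (e / n) * norm (a - u)) (nhds u)"
    using ev by (simp add: eventually_ball_finite)
  moreover have "eventually (\<lambda>a. a \<in> U) (nhds u)"
    using C u unfolding C2_def using eventually_nhds_in_open by blast
  ultimately show ?thesis
  proof eventually_elim
    case (elim a)
    have lin: "linear (\<lambda>k. f' a k - f' u k - f'' u k (a - u))"
      using C2_lin1[OF C elim(2)] C2_lin1[OF C u] C2_lin3[OF C u]
      by (intro linear_compose_sub) auto
    show ?case
    proof (intro conjI allI)
      show "a \<in> U" using elim by auto
      fix k
      have "norm (f' a k - f' u k - f'' u k (a - u)) \<le> n * ((e / n) * norm (a - u)) * norm k"
        unfolding n_def by (rule linear_expand_bound[OF lin]) (use elim n_def in auto)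
      then show "norm (f' a k - f' u k - f'' u k (a - u)) \<le> e * norm (a - u) * norm k"
        using n by simp
    qed
  qed
qed

lemma mvt_bound:
  fixes g :: "real \<Rightarrow> 'b::real_inner"
  assumes "a < b" "\<And>s. s \<in> {a..b} \<Longrightarrow> (g has_derivative (\<lambda>t. t *\<^sub>R g' s)) (at s)"
    "\<And>s. s \<in> {a<..<b} \<Longrightarrow> norm (g' s) \<le> B"
  shows "norm (g b - g a) \<le> B * (b - a)"
proof -
  have "continuous_on {a..b} g"
    using assms(2) by (intro has_derivative_continuous_on) (blast intro: has_derivative_at_withinI)
  then obtain x where x: "x \<in> {a<..<b}" "norm (g b - g a) \<le> norm ((b - a) *\<^sub>R g' x)"
    using mvt_general[OF assms(1), of g "\<lambda>s t. t *\<^sub>R g' s"] assms(2) by auto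
  have "norm ((b - a) *\<^sub>R g' x) = (b - a) * norm (g' x)" using assms(1) by simp
  moreover have "(b - a) * norm (g' x) \<le> (b - a) * B" using assms(3)[OF x(1)] assms(1) by (intro mult_left_mono) auto
  ultimately have "norm (g b - g a) \<le> (b - a) * B" using x(2) by linarith
  then show ?thesis by (simp add: mult.commute)
qed

lemma line_deriv:
  assumes C: "C2 f f' f'' U" and p: "p + s *\<^sub>R v \<in> U"
  shows "((\<lambda>s. f (p + s *\<^sub>R v)) has_derivative (\<lambda>t. t *\<^sub>R f' (p + s *\<^sub>R v) v)) (at s)"
proof -
  have d: "(f has_derivative f' (p + s *\<^sub>R v)) (at (p + s *\<^sub>R v))" using C p unfolding C2_def by auto
  have "((\<lambda>s. p + s *\<^sub>R v) has_derivative (\<lambda>t. t *\<^sub>R v)) (at s)"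
    by (auto intro!: derivative_eq_intros)
  from has_derivative_compose[OF this d]
  show ?thesis using linear_scale[OF C2_lin1[OF C p]] by simp
qed

lemma C2_TAY:
  assumes C: "C2 f f' f'' U" and u: "u \<in> U" and e: "e > 0"
  shows "eventually (\<lambda>h. norm (f (u + h) - f u - f' u h - (1/2) *\<^sub>R f'' u h h) \<le> e * (norm h)\<^sup>2) (nhds 0)"
proof -
  obtain d where d: "d > 0" and dP: "\<And>a. dist a u < d \<Longrightarrow> a \<in> U \<and> (\<forall>k. norm (f' a k - f' u k - f'' u k (a - u)) \<le> e * norm (a - u) * norm k)"
    using C2_T1[OF C u e] unfolding eventually_nhds_metric by blast
  have "norm (f (u + h) - f u - f' u h - (1/2) *\<^sub>R f'' u h h) \<le> e * (norm h)\<^sup>2" if h: "norm h < d" for h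
  proof -
    define r where "r s = f (u + s *\<^sub>R h) - f u - s *\<^sub>R f' u h - (s\<^sup>2/2) *\<^sub>R f'' u h h" for s
    define r' where "r' s = f' (u + s *\<^sub>R h) h - f' u h - s *\<^sub>R f'' u h h" for s
    have inU: "u + s *\<^sub>R h \<in> U" if "s \<in> {0..1}" for s
    proof -
      have "norm (s *\<^sub>R h) \<le> norm h" using that by (simp add: mult_left_le_one_le)
      then show ?thesis using dP[of "u + s *\<^sub>R h"] h by (simp add: dist_norm)
    qed
    have der: "(r has_derivative (\<lambda>t. t *\<^sub>R r' s)) (at s)" if "s \<in> {0..1}" for s
    proof -
      have "((\<lambda>s. f (u + s *\<^sub>R h) - f u - s *\<^sub>R f' u h - (s\<^sup>2/2) *\<^sub>R f'' u h h) has_derivative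
          (\<lambda>t. t *\<^sub>R f' (u + s *\<^sub>R h) h - 0 - t *\<^sub>R f' u h - (t * s) *\<^sub>R f'' u h h)) (at s)"
        by (rule line_deriv[OF C inU[OF that]] derivative_eq_intros refl | simp)+
      then show ?thesis unfolding r_def r'_def
        by (rule has_derivative_eq_rhs) (auto simp: algebra_simps fun_eq_iff)
    qed
    have bnd: "norm (r' s) \<le> e * (norm h)\<^sup>2" if "s \<in> {0<..<1}" for s
    proof -
      have "dist (u + s *\<^sub>R h) u < d"
        using that h by (simp add: dist_norm) (smt (verit) mult_left_le_one_le norm_ge_zero)
      then have "norm (f' (u + s *\<^sub>R h) h - f' u h - f'' u h (s *\<^sub>R h)) \<le> e * norm (s *\<^sub>R h) * norm h"
        using dP[of "u + s *\<^sub>R h"] by simp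
      also have "\<dots> \<le> e * (norm h)\<^sup>2" using that e
        by (simp add: power2_eq_square mult_left_le_one_le mult_right_le_one_le mult_le_cancel_left1)
      finally show ?thesis unfolding r'_def using linear_scale[OF C2_lin2[OF C u]] by simp
    qed
    have "norm (r 1 - r 0) \<le> e * (norm h)\<^sup>2 * (1 - 0)"
      by (rule mvt_bound[of 0 1 r r']) (use der bnd in auto)
    then show ?thesis unfolding r_def by simp
  qed
  then show ?thesis unfolding eventually_nhds_metric using d by (auto simp: dist_norm)
qed

lemma C2_half_sym:
  assumes C: "C2 f f' f'' U" and u: "u \<in> U" and e: "e > 0"
    and dP: "\<And>a. dist a u < d \<Longrightarrow> a \<in> U \<and> (\<forall>k. norm (f' a k - f' u k - f'' u k (a - u)) \<le> e * norm (a - u) * norm k)"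
    and t: "t > 0" "t * (norm v + norm w) < d"
  shows "norm ((f (u + t *\<^sub>R v + t *\<^sub>R w) - f (u + t *\<^sub>R v) - f (u + t *\<^sub>R w) + f u) - (t * t) *\<^sub>R f'' u v w)
          \<le> e * (t * (norm w + 2 * norm v) * norm v) * t"
proof -
  define k where "k s = f (u + t *\<^sub>R w + s *\<^sub>R v) - f (u + s *\<^sub>R v) - (s * t) *\<^sub>R f'' u v w" for s
  define k' where "k' s = f' (u + t *\<^sub>R w + s *\<^sub>R v) v - f' (u + s *\<^sub>R v) v - t *\<^sub>R f'' u v w" for s
  have small1: "norm (t *\<^sub>R w + s *\<^sub>R v) \<le> t * (norm v + norm w)" if "s \<in> {0..t}" for s
  proof -
    have "norm (t *\<^sub>R w + s *\<^sub>R v) \<le> norm (t *\<^sub>R w) + norm (s *\<^sub>R v)" by (rule norm_triangle_ineq)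
    also have "\<dots> = t * norm w + s * norm v" using that t by simp
    finally have "norm (t *\<^sub>R w + s *\<^sub>R v) \<le> t * norm w + s * norm v" .
    also have "\<dots> \<le> t * (norm v + norm w)" using that by (simp add: algebra_simps mult_right_mono)
    finally show ?thesis .
  qed
  have small2: "norm (s *\<^sub>R v) \<le> t * (norm v + norm w)" if "s \<in> {0..t}" for s
  proof -
    have "norm (s *\<^sub>R v) = s * norm v" using that by simp
    also have "\<dots> \<le> t * norm v" using that by (intro mult_right_mono) auto
    also have "\<dots> \<le> t * (norm v + norm w)" using that by (intro mult_left_mono) auto
    finally show ?thesis .
  qed
  have in1: "u + t *\<^sub>R w + s *\<^sub>R v \<in> U" if "s \<in> {0..t}" for s
    using dP[of "u + t *\<^sub>R w + s *\<^sub>R v"] small1[OF that] t by (simp add: dist_norm add.assoc)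
  have in2: "u + s *\<^sub>R v \<in> U" if "s \<in> {0..t}" for s
    using dP[of "u + s *\<^sub>R v"] small2[OF that] t by (simp add: dist_norm)
  have der: "(k has_derivative (\<lambda>r. r *\<^sub>R k' s)) (at s)" if "s \<in> {0..t}" for s
  proof -
    have "((\<lambda>s. f (u + t *\<^sub>R w + s *\<^sub>R v) - f (u + s *\<^sub>R v) - (s * t) *\<^sub>R f'' u v w) has_derivative
        (\<lambda>r. r *\<^sub>R f' (u + t *\<^sub>R w + s *\<^sub>R v) v - r *\<^sub>R f' (u + s *\<^sub>R v) v - (r * t) *\<^sub>R f'' u v w)) (at s)"
      by (rule line_deriv[OF C in1[OF that]] line_deriv[OF C in2[OF that]] derivative_eq_intros refl | simp)+
    then show ?thesis unfolding k_def k'_def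
      by (rule has_derivative_eq_rhs) (auto simp: algebra_simps fun_eq_iff)
  qed
  have bnd: "norm (k' s) \<le> e * (t * (norm w + 2 * norm v) * norm v)" if s: "s \<in> {0<..<t}" for s
  proof -
    have s': "s \<in> {0..t}" using s by auto
    have a1: "norm (f' (u + t *\<^sub>R w + s *\<^sub>R v) v - f' u v - f'' u v (t *\<^sub>R w + s *\<^sub>R v)) \<le> e * norm (t *\<^sub>R w + s *\<^sub>R v) * norm v"
      using dP[of "u + t *\<^sub>R w + s *\<^sub>R v"] small1[OF s'] t by (simp add: dist_norm add.assoc)
    have a2: "norm (f' (u + s *\<^sub>R v) v - f' u v - f'' u v (s *\<^sub>R v)) \<le> e * norm (s *\<^sub>R v) * norm v"
      using dP[of "u + s *\<^sub>R v"] small2[OF s'] t by (simp add: dist_norm)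
    have lin: "f'' u v (t *\<^sub>R w + s *\<^sub>R v) = t *\<^sub>R f'' u v w + f'' u v (s *\<^sub>R v)"
      using linear_add[OF C2_lin2[OF C u]] linear_scale[OF C2_lin2[OF C u]] by simp
    have kk: "k' s = (f' (u + t *\<^sub>R w + s *\<^sub>R v) v - f' u v - f'' u v (t *\<^sub>R w + s *\<^sub>R v))
               - (f' (u + s *\<^sub>R v) v - f' u v - f'' u v (s *\<^sub>R v))"
      unfolding k'_def lin by (simp add: algebra_simps)
    have "norm (k' s) \<le> e * norm (t *\<^sub>R w + s *\<^sub>R v) * norm v + e * norm (s *\<^sub>R v) * norm v"
      unfolding kk using a1 a2 norm_triangle_ineq4[of "f' (u + t *\<^sub>R w + s *\<^sub>R v) v - f' u v - f'' u v (t *\<^sub>R w + s *\<^sub>R v)" "f' (u + s *\<^sub>R v) v - f' u v - f'' u v (s *\<^sub>R v)"] by linarith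
    also have "\<dots> = e * norm v * (norm (t *\<^sub>R w + s *\<^sub>R v) + norm (s *\<^sub>R v))" by (simp add: algebra_simps)
    also have "\<dots> \<le> e * norm v * (t * (norm w + 2 * norm v))"
    proof (rule mult_left_mono)
      have "norm (t *\<^sub>R w + s *\<^sub>R v) \<le> norm (t *\<^sub>R w) + norm (s *\<^sub>R v)" by (rule norm_triangle_ineq)
      also have "\<dots> = t * norm w + s * norm v" using s t by simp
      finally have "norm (t *\<^sub>R w + s *\<^sub>R v) \<le> t * norm w + s * norm v" .
      moreover have "s * norm v \<le> t * norm v" using s by (simp add: mult_right_mono)
      ultimately show "norm (t *\<^sub>R w + s *\<^sub>R v) + norm (s *\<^sub>R v) \<le> t * (norm w + 2 * norm v)"
        using s by (simp add: algebra_simps)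
      show "0 \<le> e * norm v" using e by simp
    qed
    finally show ?thesis by (simp add: algebra_simps)
  qed
  have "norm (k t - k 0) \<le> e * (t * (norm w + 2 * norm v) * norm v) * (t - 0)"
    by (rule mvt_bound[of 0 t k k']) (use der bnd t in auto)
  moreover have "k t - k 0 = (f (u + t *\<^sub>R v + t *\<^sub>R w) - f (u + t *\<^sub>R v) - f (u + t *\<^sub>R w) + f u) - (t * t) *\<^sub>R f'' u v w"
    unfolding k_def by (simp add: algebra_simps)
  ultimately show ?thesis by simp
qed

lemma C2_sym:
  assumes C: "C2 f f' f'' U" and u: "u \<in> U"
  shows "f'' u v w = f'' u w v"
proof -
  define M where "M = (norm w + 2 * norm v) * norm v + (norm v + 2 * norm w) * norm w"
  have "norm (f'' u v w - f'' u w v) \<le> e * M" if e: "e > 0" for e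
  proof -
    obtain d where d: "d > 0" and dP: "\<And>a. dist a u < d \<Longrightarrow> a \<in> U \<and> (\<forall>k. norm (f' a k - f' u k - f'' u k (a - u)) \<le> e * norm (a - u) * norm k)"
      using C2_T1[OF C u e] unfolding eventually_nhds_metric by blast
    define t where "t = d / (2 * (norm v + norm w + 1))"
    have c: "2 * (norm v + norm w + 1) > 0" by (smt (verit) norm_ge_zero)
    have t0: "t > 0" unfolding t_def using d c by simp
    have td: "t * (2 * (norm v + norm w + 1)) = d" unfolding t_def using c by simp
    have "t * (norm v + norm w) < t * (2 * (norm v + norm w + 1))"
      using t0 c by (intro mult_strict_left_mono) (smt (verit) norm_ge_zero)+
    then have t1: "t * (norm v + norm w) < d" using td by linarith
    then have t2: "t * (norm w + norm v) < d" by (metis add.commute)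
    note t = t0 t1 t2
    define D where "D = f (u + t *\<^sub>R v + t *\<^sub>R w) - f (u + t *\<^sub>R v) - f (u + t *\<^sub>R w) + f u"
    have D2: "D = f (u + t *\<^sub>R w + t *\<^sub>R v) - f (u + t *\<^sub>R w) - f (u + t *\<^sub>R v) + f u"
      unfolding D_def by (simp add: algebra_simps)
    have 1: "norm (D - (t * t) *\<^sub>R f'' u v w) \<le> e * (t * (norm w + 2 * norm v) * norm v) * t"
      unfolding D_def by (rule C2_half_sym[OF C u e dP t(1,2)])
    have 2: "norm (D - (t * t) *\<^sub>R f'' u w v) \<le> e * (t * (norm v + 2 * norm w) * norm w) * t"
      unfolding D2 by (rule C2_half_sym[OF C u e dP t(1,3)])
    have "norm ((t * t) *\<^sub>R (f'' u v w - f'' u w v)) \<le> e * (t * (norm w + 2 * norm v) * norm v) * t + e * (t * (norm v + 2 * norm w) * norm w) * t"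
    proof -
      have eqD: "(t * t) *\<^sub>R (f'' u v w - f'' u w v) = (D - (t * t) *\<^sub>R f'' u w v) - (D - (t * t) *\<^sub>R f'' u v w)"
        by (simp add: algebra_simps)
      show ?thesis unfolding eqD
        using 1 2 norm_triangle_ineq4[of "D - (t * t) *\<^sub>R f'' u w v" "D - (t * t) *\<^sub>R f'' u v w"] by linarith
    qed
    also have "\<dots> = (t * t) * (e * M)" unfolding M_def by (simp add: algebra_simps)
    finally have "(t * t) * norm (f'' u v w - f'' u w v) \<le> (t * t) * (e * M)" using t by simp
    then show ?thesis using t by (simp add: mult_le_cancel_left_pos)
  qed
  then have "norm (f'' u v w - f'' u w v) \<le> 0"
  proof -
    assume h: "\<And>e. e > 0 \<Longrightarrow> norm (f'' u v w - f'' u w v) \<le> e * M"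
    have M: "M \<ge> 0" unfolding M_def by simp
    show ?thesis
    proof (rule ccontr)
      assume "\<not> ?thesis"
      then have p: "norm (f'' u v w - f'' u w v) > 0" by simp
      have "norm (f'' u v w - f'' u w v) / (2 * (M + 1)) > 0" using p M by simp
      from h[OF this] have "norm (f'' u v w - f'' u w v) \<le> (norm (f'' u v w - f'' u w v) / (2 * (M + 1))) * M" .
      also have "\<dots> = norm (f'' u v w - f'' u w v) * (M / (2 * (M + 1)))" by simp
      also have "\<dots> < norm (f'' u v w - f'' u w v) * 1"
        using p M by (intro mult_strict_left_mono) (simp_all add: field_simps)
      also have "\<dots> = norm (f'' u v w - f'' u w v)" by simp
      finally show False by simp
    qed
  qed
  then show ?thesis by simp
qed

lemma C2_first:
  assumes C: "C2 f f' f'' U" and u: "u \<in> U" and e: "e > 0"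
  shows "eventually (\<lambda>h. norm (f (u + h) - f u - f' u h) \<le> e * norm h) (nhds 0)"
proof -
  have "(f has_derivative f' u) (at u)" using C u unfolding C2_def by auto
  then obtain d where "d > 0" "\<forall>y. norm (y - u) < d \<longrightarrow> norm (f y - f u - f' u (y - u)) \<le> e * norm (y - u)"
    using e unfolding has_derivative_at_alt by blast
  then show ?thesis unfolding eventually_nhds_metric
    by (intro exI[of _ d]) (auto simp: dist_norm dest: spec[of _ "u + _"])
qed

lemma C2_bilinear:
  assumes C: "C2 f f' f'' U" and u: "u \<in> U"
  shows "bounded_bilinear (f'' u)"
  using C2_lin2[OF C u] C2_lin3[OF C u]
  by (subst bilinear_conv_bounded_bilinear[symmetric]) (auto simp: bilinear_def)

lemma C2_scale2:
  assumes C: "C2 f f' f'' U" and u: "u \<in> U"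
  shows "f'' u (c *\<^sub>R v) (c *\<^sub>R v) = (c * c) *\<^sub>R f'' u v v"
  by (simp add: linear_scale[OF C2_lin2[OF C u]] linear_scale[OF C2_lin3[OF C u]])

lemma compare_quad:
  fixes f1 :: "'a::euclidean_space \<Rightarrow> 'b::euclidean_space"
    and f2 :: "'c::euclidean_space \<Rightarrow> 'b"
  assumes C1: "C2 f1 f1' f1'' U1" and u1: "u1 \<in> U1" and H1: "homeomorphism U1 (N \<inter> W1) f1 g1"
    and C2': "C2 f2 f2' f2'' U2" and u2: "u2 \<in> U2" and H2: "homeomorphism U2 (N \<inter> W2) f2 g2"
    and W2: "open W2" and inj2: "inj (f2' u2)" and y: "f1 u1 = f2 u2"
  shows "\<exists>v2. f2' u2 v2 = f1' u1 v1 \<and>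
           (\<forall>P::'b\<Rightarrow>'b. linear P \<and> (\<forall>z. P (f2' u2 z) = 0) \<longrightarrow> P (f1'' u1 v1 v1) = P (f2'' u2 v2 v2))"
proof -
  define F :: "real filter" where "F = at_right 0"
  have Fnb: "F \<noteq> bot" unfolding F_def by simp
  define X where "X = f1' u1 v1"
  define L2 where "L2 = f2' u2"
  have linL2: "linear L2" unfolding L2_def using C2_lin1[OF C2' u2] .
  obtain c where c: "c > 0" "\<And>x. c * norm x \<le> norm (L2 x)"
    using linear_inj_bounded_below_pos[OF linL2 inj2[folded L2_def]] by blast
  define a where "a t = u1 + t *\<^sub>R v1" for t :: real
  have a_lim: "(a \<longlongrightarrow> u1) F" unfolding a_def F_def
    by (auto intro!: tendsto_eq_intros)
  have ev_aU: "eventually (\<lambda>t. a t \<in> U1) F"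
    using topological_tendstoD[OF a_lim] C1 u1 unfolding C2_def by auto
  have tpos: "eventually (\<lambda>t. t > 0) F" unfolding F_def by (simp add: eventually_at_right_less)
  define yt where "yt t = f1 (a t)" for t
  have "isCont f1 u1" using C1 u1 unfolding C2_def
    by (meson has_derivative_continuous)
  then have yt_lim: "(yt \<longlongrightarrow> f2 u2) F" unfolding yt_def using isCont_tendsto_compose[OF _ a_lim] y by metis
  have yN: "f2 u2 \<in> N \<inter> W2" using H2 u2 unfolding homeomorphism_def by auto
  have ev_W2: "eventually (\<lambda>t. yt t \<in> W2) F"
    using topological_tendstoD[OF yt_lim W2] yN by auto
  have ev_yN: "eventually (\<lambda>t. yt t \<in> N \<inter> W2) F"
    using ev_aU ev_W2 H1 unfolding yt_def homeomorphism_def by (auto elim: eventually_mono[rotated] eventually_elim2)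
  define h where "h t = g2 (yt t) - u2" for t
  have g2c: "continuous_on (N \<inter> W2) g2" and g2y: "g2 (f2 u2) = u2"
    using H2 u2 unfolding homeomorphism_def by auto
  have "((\<lambda>t. g2 (yt t)) \<longlongrightarrow> g2 (f2 u2)) F"
    by (rule continuous_on_tendsto_compose[OF g2c yt_lim yN ev_yN])
  then have h_lim: "(h \<longlongrightarrow> 0) F" unfolding h_def g2y
    using tendsto_diff[OF _ tendsto_const[of u2]] by (metis (no_types) diff_self)
  have ev_eq: "eventually (\<lambda>t. f2 (u2 + h t) = yt t) F"
    using ev_yN H2 unfolding h_def homeomorphism_def by (auto elim: eventually_mono)
  have h1_lim: "((\<lambda>t. t *\<^sub>R v1) \<longlongrightarrow> 0) F" unfolding F_def by (auto intro!: tendsto_eq_intros)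
  have fo2: "eventually (\<lambda>t. norm (yt t - f2 u2 - L2 (h t)) \<le> e * norm (h t)) F" if "e > 0" for e
  proof -
    have "eventually (\<lambda>t. norm (f2 (u2 + h t) - f2 u2 - L2 (h t)) \<le> e * norm (h t)) F"
      using eventually_compose_filterlim[OF C2_first[OF C2' u2 that] h_lim] unfolding L2_def .
    then show ?thesis using ev_eq by eventually_elim simp
  qed
  have fo1: "eventually (\<lambda>t. norm (yt t - f2 u2 - t *\<^sub>R X) \<le> e * (t * norm v1)) F" if "e > 0" for e
  proof -
    have "eventually (\<lambda>t. norm (f1 (u1 + t *\<^sub>R v1) - f1 u1 - f1' u1 (t *\<^sub>R v1)) \<le> e * norm (t *\<^sub>R v1)) F"
      using eventually_compose_filterlim[OF C2_first[OF C1 u1 that] h1_lim] .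
    then show ?thesis using tpos unfolding yt_def a_def X_def
      by eventually_elim (simp add: y linear_scale[OF C2_lin1[OF C1 u1]])
  qed
  define Cb where "Cb = 2 * (norm X + norm v1) / c"
  have hb: "eventually (\<lambda>t. norm (h t) \<le> Cb * t) F"
    using fo2[OF half_gt_zero[OF c(1)]] fo1[OF zero_less_one] tpos
  proof eventually_elim
    case (elim t)
    have "L2 (h t) - t *\<^sub>R X = (yt t - f2 u2 - t *\<^sub>R X) - (yt t - f2 u2 - L2 (h t))" by simp
    then have "norm (L2 (h t) - t *\<^sub>R X) \<le> t * norm v1 + c / 2 * norm (h t)"
      using elim norm_triangle_ineq4[of "yt t - f2 u2 - t *\<^sub>R X" "yt t - f2 u2 - L2 (h t)"] by simp
    then have "norm (L2 (h t)) \<le> t * norm X + t * norm v1 + c / 2 * norm (h t)"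
      using norm_triangle_ineq2[of "L2 (h t)" "t *\<^sub>R X"] elim by simp
    then have "c * norm (h t) \<le> t * norm X + t * norm v1 + c / 2 * norm (h t)" using c(2)[of "h t"] by linarith
    then have "c * norm (h t) \<le> 2 * t * (norm X + norm v1)" by (simp add: algebra_simps)
    then show ?case unfolding Cb_def using c(1) by (simp add: field_simps)
  qed
  define q where "q t = (1 / t) *\<^sub>R h t" for t
  have Lq_lim: "((\<lambda>t. L2 (q t)) \<longlongrightarrow> X) F"
    unfolding tendsto_iff
  proof (intro allI impI)
    fix e :: real assume e: "e > 0"
    define e' where "e' = e / (2 * (Cb + norm v1 + 1))"
    have Cb0: "Cb \<ge> 0" unfolding Cb_def using c(1) by simp
    have den: "2 * (Cb + norm v1 + 1) > 0" using Cb0 norm_ge_zero[of v1] by (smt (verit))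
    have e': "e' > 0" unfolding e'_def using e den by (rule divide_pos_pos)
    show "eventually (\<lambda>t. dist (L2 (q t)) X < e) F"
      using fo2[OF e'] fo1[OF e'] hb tpos
    proof eventually_elim
      case (elim t)
      have "L2 (h t) - t *\<^sub>R X = (yt t - f2 u2 - t *\<^sub>R X) - (yt t - f2 u2 - L2 (h t))" by simp
      then have "norm (L2 (h t) - t *\<^sub>R X) \<le> e' * (t * norm v1) + e' * norm (h t)"
        using elim norm_triangle_ineq4[of "yt t - f2 u2 - t *\<^sub>R X" "yt t - f2 u2 - L2 (h t)"] by simp
      also have "\<dots> \<le> e' * (t * norm v1) + e' * (Cb * t)" using elim e' by (simp add: mult_left_mono)
      also have "\<dots> = t * (e' * (Cb + norm v1))" by (simp add: algebra_simps)
      also have "\<dots> < t * e"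
      proof (rule mult_strict_left_mono)
        have lt: "Cb + norm v1 < 2 * (Cb + norm v1 + 1)" using den by (smt (verit))
        have "e' * (Cb + norm v1) < e' * (2 * (Cb + norm v1 + 1))"
          by (rule mult_strict_left_mono[OF lt e'])
        also have "\<dots> = e" unfolding e'_def using den by simp
        finally show "e' * (Cb + norm v1) < e" .
      qed (use elim in auto)
      finally have lt: "norm (L2 (h t) - t *\<^sub>R X) < t * e" .
      have eq: "L2 (q t) - X = (1 / t) *\<^sub>R (L2 (h t) - t *\<^sub>R X)"
        unfolding q_def using linear_scale[OF linL2] elim by (simp add: scaleR_diff_right)
      have "dist (L2 (q t)) X = norm (L2 (h t) - t *\<^sub>R X) / t"
        unfolding dist_norm eq using elim by simp
      also have "\<dots> < e" using lt elim by (simp add: divide_less_eq mult.commute)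
      finally show ?case .
    qed
  qed
  have "X \<in> range L2"
  proof (rule Lim_in_closed_set[OF _ _ Fnb Lq_lim])
    show "closed (range L2)" using closed_subspace linear_subspace_image[OF linL2 subspace_UNIV] by blast
  qed auto
  then obtain v2 where v2: "L2 v2 = X" by auto
  have q_lim: "(q \<longlongrightarrow> v2) F"
    unfolding tendsto_iff
  proof (intro allI impI)
    fix e :: real assume e: "e > 0"
    have "eventually (\<lambda>t. dist (L2 (q t)) X < c * e) F" using Lq_lim c(1) e unfolding tendsto_iff by auto
    then show "eventually (\<lambda>t. dist (q t) v2 < e) F"
    proof eventually_elim
      case (elim t)
      have "c * norm (q t - v2) \<le> norm (L2 (q t - v2))" by (rule c(2))
      also have "\<dots> = dist (L2 (q t)) X" using linear_diff[OF linL2] v2 by (simp add: dist_norm)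
      finally have "c * norm (q t - v2) < c * e" using elim by linarith
      then show ?case using c(1) by (simp add: dist_norm mult_less_cancel_left_pos)
    qed
  qed
  show ?thesis
  proof (rule exI[of _ v2], intro conjI allI impI)
    show "f2' u2 v2 = f1' u1 v1" using v2 unfolding L2_def X_def .
    fix P :: "'b \<Rightarrow> 'b" assume P: "linear P \<and> (\<forall>z. P (f2' u2 z) = 0)"
    then have linP: "linear P" and P0: "\<And>z. P (L2 z) = 0" unfolding L2_def by auto
    obtain KP where KP: "KP > 0" "\<And>x. norm (P x) \<le> KP * norm x" using linear_bounded_pos[OF linP] by blast
    have PX: "P X = 0" using P0 v2 by metis
    have lim2: "((\<lambda>t. P (f2'' u2 (q t) (q t))) \<longlongrightarrow> P (f2'' u2 v2 v2)) F"
      using bounded_linear.tendsto[OF linP[unfolded linear_conv_bounded_linear]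
              bounded_bilinear.tendsto[OF C2_bilinear[OF C2' u2] q_lim q_lim]] .
    define M where "M = 2 * KP * (norm v1 ^ 2 + Cb ^ 2)"
    have M0: "M \<ge> 0" unfolding M_def using KP by simp
    have bnd: "norm (P (f1'' u1 v1 v1) - P (f2'' u2 v2 v2)) \<le> e * M" if e: "e > 0" for e
    proof (rule Lim_norm_ubound[OF Fnb tendsto_diff[OF tendsto_const lim2]])
      have t1: "eventually (\<lambda>t. norm (f1 (u1 + t *\<^sub>R v1) - f1 u1 - f1' u1 (t *\<^sub>R v1) - (1/2) *\<^sub>R f1'' u1 (t *\<^sub>R v1) (t *\<^sub>R v1)) \<le> e * (norm (t *\<^sub>R v1))\<^sup>2) F"
        using eventually_compose_filterlim[OF C2_TAY[OF C1 u1 e] h1_lim] .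
      have t2: "eventually (\<lambda>t. norm (f2 (u2 + h t) - f2 u2 - f2' u2 (h t) - (1/2) *\<^sub>R f2'' u2 (h t) (h t)) \<le> e * (norm (h t))\<^sup>2) F"
        using eventually_compose_filterlim[OF C2_TAY[OF C2' u2 e] h_lim] .
      show "eventually (\<lambda>t. norm (P (f1'' u1 v1 v1) - P (f2'' u2 (q t) (q t))) \<le> e * M) F"
        using t1 t2 ev_eq hb tpos
      proof eventually_elim
        case (elim t)
        define A where "A = f1 (u1 + t *\<^sub>R v1) - f1 u1 - f1' u1 (t *\<^sub>R v1) - (1/2) *\<^sub>R f1'' u1 (t *\<^sub>R v1) (t *\<^sub>R v1)"
        define B where "B = f2 (u2 + h t) - f2 u2 - f2' u2 (h t) - (1/2) *\<^sub>R f2'' u2 (h t) (h t)"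
        have ht: "h t = t *\<^sub>R q t" unfolding q_def using elim by simp
        have e1: "f1' u1 (t *\<^sub>R v1) = t *\<^sub>R L2 v2"
          using linear_scale[OF C2_lin1[OF C1 u1]] v2 unfolding X_def by simp
        have "f2 (u2 + h t) = f1 (u1 + t *\<^sub>R v1)" using elim unfolding yt_def a_def by simp
        then have "A - B = f2' u2 (h t) - f1' u1 (t *\<^sub>R v1) + (1/2) *\<^sub>R f2'' u2 (h t) (h t) - (1/2) *\<^sub>R f1'' u1 (t *\<^sub>R v1) (t *\<^sub>R v1)"
          unfolding A_def B_def using y by (simp add: algebra_simps)
        also have "\<dots> = L2 (h t) - t *\<^sub>R L2 v2 + ((t * t) / 2) *\<^sub>R (f2'' u2 (q t) (q t) - f1'' u1 v1 v1)"
          unfolding ht e1 C2_scale2[OF C1 u1] C2_scale2[OF C2' u2] L2_def by (simp add: algebra_simps)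
        finally have "P (A - B) = ((t * t) / 2) *\<^sub>R (P (f2'' u2 (q t) (q t)) - P (f1'' u1 v1 v1))"
          using linear_diff[OF linP] linear_add[OF linP] linear_scale[OF linP] P0 by simp
        then have "((t * t) / 2) * norm (P (f1'' u1 v1 v1) - P (f2'' u2 (q t) (q t))) = norm (P (A - B))"
          using elim by (simp add: norm_minus_commute)
        also have "\<dots> \<le> KP * norm (A - B)" by (rule KP(2))
        also have "\<dots> \<le> KP * (norm A + norm B)" using KP by (simp add: mult_left_mono norm_triangle_ineq4)
        also have "\<dots> \<le> KP * (e * (t * norm v1)\<^sup>2 + e * (Cb * t)\<^sup>2)"
        proof (rule mult_left_mono)
          have "norm A \<le> e * (t * norm v1)\<^sup>2" using elim unfolding A_def by simp
          moreover have "(norm (h t))\<^sup>2 \<le> (Cb * t)\<^sup>2" using elim by (simp add: power_mono)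
          then have "norm B \<le> e * (Cb * t)\<^sup>2" using elim e unfolding B_def
            by (meson mult_left_mono order_trans less_imp_le)
          ultimately show "norm A + norm B \<le> e * (t * norm v1)\<^sup>2 + e * (Cb * t)\<^sup>2" by simp
        qed (use KP in simp)
        also have "\<dots> = ((t * t) / 2) * (e * M)" unfolding M_def by (simp add: algebra_simps power2_eq_square)
        finally show ?case using elim by (simp add: mult_le_cancel_left_pos)
      qed
    qed
    show "P (f1'' u1 v1 v1) = P (f2'' u2 v2 v2)"
    proof (rule ccontr)
      assume ne: "P (f1'' u1 v1 v1) \<noteq> P (f2'' u2 v2 v2)"
      define n where "n = norm (P (f1'' u1 v1 v1) - P (f2'' u2 v2 v2))"
      have n: "n > 0" unfolding n_def using ne by simp
      have "n / (2 * (M + 1)) > 0" using n M0 by simp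
      from bnd[OF this] have "n \<le> n / (2 * (M + 1)) * M" unfolding n_def .
      also have "\<dots> = n * (M / (2 * (M + 1)))" by simp
      also have "\<dots> < n * 1" using n M0 by (intro mult_strict_left_mono) (simp_all add: field_simps)
      finally show False by simp
    qed
  qed
qed

definition Pr :: "'a::euclidean_space set \<Rightarrow> 'a \<Rightarrow> 'a" where
  "Pr T z = z - closest_point T z"

lemma cp_props:
  fixes T :: "'a::euclidean_space set"
  assumes T: "subspace T"
  shows "closest_point T z \<in> T" "\<And>t. t \<in> T \<Longrightarrow> (z - closest_point T z) \<bullet> t = 0"
proof -
  have cl: "closed T" using closed_subspace T by blast
  have ne: "T \<noteq> {}" using subspace_0[OF T] by auto
  show cpT: "closest_point T z \<in> T" using closest_point_exists[OF cl ne] by auto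
  fix t assume t: "t \<in> T"
  have cv: "convex T" using subspace_imp_convex[OF T] .
  have 1: "(z - closest_point T z) \<bullet> ((closest_point T z + t) - closest_point T z) \<le> 0"
    by (rule closest_point_dot[OF cv cl]) (use subspace_add[OF T cpT t] in auto)
  have 2: "(z - closest_point T z) \<bullet> ((closest_point T z - t) - closest_point T z) \<le> 0"
    by (rule closest_point_dot[OF cv cl]) (use subspace_diff[OF T cpT t] in auto)
  show "(z - closest_point T z) \<bullet> t = 0" using 1 2 by (simp add: inner_diff_right)
qed

lemma cp_unique:
  fixes T :: "'a::euclidean_space set"
  assumes T: "subspace T" and p: "p \<in> T" and o: "\<And>t. t \<in> T \<Longrightarrow> (z - p) \<bullet> t = 0"
  shows "p = closest_point T z"
proof -
  define c where "c = closest_point T z"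
  have cT: "c \<in> T" and co: "\<And>t. t \<in> T \<Longrightarrow> (z - c) \<bullet> t = 0" using cp_props[OF T] unfolding c_def by auto
  have d: "p - c \<in> T" using subspace_diff[OF T p cT] .
  have "(p - c) \<bullet> (p - c) = (z - c) \<bullet> (p - c) - (z - p) \<bullet> (p - c)" by (simp add: inner_diff_left)
  also have "\<dots> = 0" using co[OF d] o[OF d] by simp
  finally show ?thesis unfolding c_def[symmetric] by simp
qed

lemma Pr_props:
  fixes T :: "'a::euclidean_space set"
  assumes T: "subspace T"
  shows "linear (Pr T)" "\<And>t. t \<in> T \<Longrightarrow> Pr T t = 0" "\<And>t. t \<in> T \<Longrightarrow> Pr T z \<bullet> t = 0"
    "z - Pr T z \<in> T"
proof -
  show o: "\<And>t. t \<in> T \<Longrightarrow> Pr T z \<bullet> t = 0" unfolding Pr_def using cp_props[OF T] by auto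
  show "z - Pr T z \<in> T" unfolding Pr_def using cp_props[OF T] by auto
  show "\<And>t. t \<in> T \<Longrightarrow> Pr T t = 0"
    unfolding Pr_def using cp_unique[OF T] by (metis diff_self inner_zero_left right_minus_eq)
  have cpeq: "closest_point T a = a - Pr T a" for a unfolding Pr_def by simp
  have add: "Pr T (a + b) = Pr T a + Pr T b" for a b
  proof -
    have "a - Pr T a + (b - Pr T b) = closest_point T (a + b)"
    proof (rule cp_unique[OF T])
      show "a - Pr T a + (b - Pr T b) \<in> T" using cp_props(1)[OF T] cpeq subspace_add[OF T] by metis
      fix t assume t: "t \<in> T"
      have "(a + b - (a - Pr T a + (b - Pr T b))) \<bullet> t = Pr T a \<bullet> t + Pr T b \<bullet> t"
        by (simp add: inner_add_left)
      then show "(a + b - (a - Pr T a + (b - Pr T b))) \<bullet> t = 0"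
        using t unfolding Pr_def using cp_props(2)[OF T] by simp
    qed
    then show ?thesis unfolding Pr_def by (simp add: algebra_simps)
  qed
  have sc: "Pr T (r *\<^sub>R a) = r *\<^sub>R Pr T a" for r a
  proof -
    have "r *\<^sub>R (a - Pr T a) = closest_point T (r *\<^sub>R a)"
    proof (rule cp_unique[OF T])
      show "r *\<^sub>R (a - Pr T a) \<in> T" using subspace_scale[OF T cp_props(1)[OF T, of a], of r] cpeq by simp
      fix t assume t: "t \<in> T"
      have "(r *\<^sub>R a - r *\<^sub>R (a - Pr T a)) \<bullet> t = r * (Pr T a \<bullet> t)" by (simp add: algebra_simps)
      then show "(r *\<^sub>R a - r *\<^sub>R (a - Pr T a)) \<bullet> t = 0"
        using t unfolding Pr_def using cp_props(2)[OF T] by simp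
    qed
    then show ?thesis unfolding Pr_def by (simp add: algebra_simps)
  qed
  show "linear (Pr T)" by (rule linearI) (simp_all add: add sc)
qed

lemma chart_data:
  assumes "is_chart N U \<phi>"
  obtains f' f'' W \<psi> where "C2 \<phi> f' f'' U" "\<And>u. u \<in> U \<Longrightarrow> inj (f' u)" "open W"
    "homeomorphism U (N \<inter> W) \<phi> \<psi>"
proof -
  have o: "open U" and s: "smooth_on \<phi> U" and i: "\<forall>u\<in>U. inj (frechet_derivative \<phi> (at u))"
    and h: "\<exists>W \<psi>. open W \<and> homeomorphism U (N \<inter> W) \<phi> \<psi>"
    using assms unfolding is_chart_def by auto
  obtain f' f'' where C: "C2 \<phi> f' f'' U" using smooth_C2[OF s o] by blast
  have "\<And>u. u \<in> U \<Longrightarrow> inj (f' u)" using i C2_fd[OF C] by auto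
  then show ?thesis using that C h by blast
qed

lemma tangent_eq:
  fixes N :: "(real^'q) set" and U :: "(real^'k::finite) set"
  assumes ch: "is_chart N U \<phi>" and u: "u \<in> U" and y: "\<phi> u = y"
  shows "tangent_space TYPE('k) N y = range (frechet_derivative \<phi> (at u))"
proof
  show "range (frechet_derivative \<phi> (at u)) \<subseteq> tangent_space TYPE('k) N y"
    unfolding tangent_space_def using ch u y by blast
  show "tangent_space TYPE('k) N y \<subseteq> range (frechet_derivative \<phi> (at u))"
  proof
    fix X assume "X \<in> tangent_space TYPE('k) N y"
    then obtain U1 :: "(real^'k) set" and \<phi>1 u1 v1 where ch1: "is_chart N U1 \<phi>1" and u1: "u1 \<in> U1"
      and y1: "\<phi>1 u1 = y" and X: "X = frechet_derivative \<phi>1 (at u1) v1"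
      unfolding tangent_space_def by blast
    obtain f1' f1'' W1 \<psi>1 where C1: "C2 \<phi>1 f1' f1'' U1" and H1: "homeomorphism U1 (N \<inter> W1) \<phi>1 \<psi>1"
      using chart_data[OF ch1] by metis
    obtain f' f'' W \<psi> where C: "C2 \<phi> f' f'' U" and inj: "\<And>u. u \<in> U \<Longrightarrow> inj (f' u)" and W: "open W"
      and H: "homeomorphism U (N \<inter> W) \<phi> \<psi>"
      using chart_data[OF ch] by metis
    obtain v2 where "f' u v2 = f1' u1 v1"
      using compare_quad[OF C1 u1 H1 C u H W inj[OF u], of v1] y y1 by auto
    then show "X \<in> range (frechet_derivative \<phi> (at u))"
      using X C2_fd[OF C u] C2_fd[OF C1 u1] by (metis rangeI)
  qed
qed

lemma tangent_subspace:
  fixes N :: "(real^'q) set" and U :: "(real^'k::finite) set"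
  assumes ch: "is_chart N U \<phi>" and u: "u \<in> U" and y: "\<phi> u = y"
  shows "subspace (tangent_space TYPE('k) N y)"
proof -
  obtain f' f'' W \<psi> where C: "C2 \<phi> f' f'' U"
    using chart_data[OF ch] by metis
  show ?thesis unfolding tangent_eq[OF ch u y] C2_fd[OF C u]
    using linear_subspace_image[OF C2_lin1[OF C u] subspace_UNIV] .
qed

lemma B_agree:
  fixes N :: "(real^'q) set" and U1 U2 :: "(real^'k::finite) set"
  assumes ch1: "is_chart N U1 \<phi>1" and u1: "u1 \<in> U1" and y1: "\<phi>1 u1 = y"
    and ch2: "is_chart N U2 \<phi>2" and u2: "u2 \<in> U2" and y2: "\<phi>2 u2 = y"
    and vv: "frechet_derivative \<phi>1 (at u1) v1 = frechet_derivative \<phi>2 (at u2) v2"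
    and ww: "frechet_derivative \<phi>1 (at u1) w1 = frechet_derivative \<phi>2 (at u2) w2"
  shows "Pr (tangent_space TYPE('k) N y) (d2 \<phi>1 u1 v1 w1) = Pr (tangent_space TYPE('k) N y) (d2 \<phi>2 u2 v2 w2)"
proof -
  obtain f1' f1'' W1 \<psi>1 where C1: "C2 \<phi>1 f1' f1'' U1" and H1: "homeomorphism U1 (N \<inter> W1) \<phi>1 \<psi>1"
    using chart_data[OF ch1] by metis
  obtain f2' f2'' W2 \<psi>2 where C2': "C2 \<phi>2 f2' f2'' U2" and inj: "\<And>u. u \<in> U2 \<Longrightarrow> inj (f2' u)" and W: "open W2"
    and H2: "homeomorphism U2 (N \<inter> W2) \<phi>2 \<psi>2"
    using chart_data[OF ch2] by metis
  define T where "T = tangent_space TYPE('k) N y"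
  have T: "subspace T" unfolding T_def by (rule tangent_subspace[OF ch2 u2 y2])
  have Teq: "T = range (f2' u2)" unfolding T_def tangent_eq[OF ch2 u2 y2] C2_fd[OF C2' u2] ..
  define P where "P = Pr T"
  have linP: "linear P" unfolding P_def using Pr_props(1)[OF T] .
  have P0: "\<forall>z. P (f2' u2 z) = 0" unfolding P_def using Pr_props(2)[OF T] Teq by auto
  have quad: "P (f1'' u1 a a) = P (f2'' u2 b b)" if ab: "f2' u2 b = f1' u1 a" for a b
  proof -
    obtain b' where b': "f2' u2 b' = f1' u1 a" and Pq: "\<forall>P::real^'q\<Rightarrow>real^'q. linear P \<and> (\<forall>z. P (f2' u2 z) = 0) \<longrightarrow> P (f1'' u1 a a) = P (f2'' u2 b' b')"
      using compare_quad[OF C1 u1 H1 C2' u2 H2 W inj[OF u2], of a] y1 y2 by auto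
    have "b' = b" using inj[OF u2] b' ab by (metis injD)
    then show ?thesis using Pq linP P0 by auto
  qed
  have vv': "f2' u2 v2 = f1' u1 v1" and ww': "f2' u2 w2 = f1' u1 w1"
    using vv ww C2_fd[OF C1 u1] C2_fd[OF C2' u2] by auto
  have sw: "f2' u2 (v2 + w2) = f1' u1 (v1 + w1)"
    using vv' ww' linear_add[OF C2_lin1[OF C1 u1]] linear_add[OF C2_lin1[OF C2' u2]] by simp
  have exp1: "f1'' u1 (v1 + w1) (v1 + w1) = f1'' u1 v1 v1 + 2 *\<^sub>R f1'' u1 v1 w1 + f1'' u1 w1 w1"
    using linear_add[OF C2_lin2[OF C1 u1]] linear_add[OF C2_lin3[OF C1 u1]] C2_sym[OF C1 u1, of w1 v1]
    by (simp add: scaleR_2 algebra_simps)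
  have exp2: "f2'' u2 (v2 + w2) (v2 + w2) = f2'' u2 v2 v2 + 2 *\<^sub>R f2'' u2 v2 w2 + f2'' u2 w2 w2"
    using linear_add[OF C2_lin2[OF C2' u2]] linear_add[OF C2_lin3[OF C2' u2]] C2_sym[OF C2' u2, of w2 v2]
    by (simp add: scaleR_2 algebra_simps)
  have "P (f1'' u1 (v1 + w1) (v1 + w1)) = P (f2'' u2 (v2 + w2) (v2 + w2))" using quad[OF sw] .
  then have "P (f1'' u1 v1 v1) + 2 *\<^sub>R P (f1'' u1 v1 w1) + P (f1'' u1 w1 w1) =
             P (f2'' u2 v2 v2) + 2 *\<^sub>R P (f2'' u2 v2 w2) + P (f2'' u2 w2 w2)"
    unfolding exp1 exp2 using linear_add[OF linP] linear_scale[OF linP] by simp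
  then have "P (f1'' u1 v1 w1) = P (f2'' u2 v2 w2)" using quad[OF vv'] quad[OF ww'] by simp
  then show ?thesis unfolding P_def T_def using C2_d2[OF C1 u1] C2_d2[OF C2' u2] by simp
qed

lemma vec_cs:
  fixes v :: "'i \<Rightarrow> 'v::real_normed_vector"
  shows "(norm (\<Sum>i\<in>I. a i *\<^sub>R v i))\<^sup>2 \<le> (\<Sum>i\<in>I. (a i)\<^sup>2) * (\<Sum>i\<in>I. (norm (v i))\<^sup>2)"
proof -
  have "norm (\<Sum>i\<in>I. a i *\<^sub>R v i) \<le> (\<Sum>i\<in>I. norm (a i *\<^sub>R v i))" by (rule norm_sum)
  also have "\<dots> = (\<Sum>i\<in>I. \<bar>a i\<bar> * norm (v i))" by simp
  finally have 1: "norm (\<Sum>i\<in>I. a i *\<^sub>R v i) \<le> (\<Sum>i\<in>I. \<bar>a i\<bar> * norm (v i))" .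
  have "(norm (\<Sum>i\<in>I. a i *\<^sub>R v i))\<^sup>2 \<le> (\<Sum>i\<in>I. \<bar>a i\<bar> * norm (v i))\<^sup>2"
    using 1 by (intro power_mono) auto
  also have "\<dots> \<le> (\<Sum>i\<in>I. (\<bar>a i\<bar>)\<^sup>2) * (\<Sum>i\<in>I. (norm (v i))\<^sup>2)" by (rule Cauchy_Schwarz_ineq_sum)
  finally show ?thesis by simp
qed

lemma final_alg:
  fixes b :: "'v::real_inner \<Rightarrow> 'v \<Rightarrow> 'v" and e :: "'k::finite \<Rightarrow> 'v" and x y :: 'v
  assumes lin1: "\<And>Y. linear (\<lambda>X. b X Y)" and lin2: "\<And>X. linear (b X)"
    and orth: "\<And>i j. e i \<bullet> e j = (if i = j then 1 else 0)"
    and xexp: "x = (\<Sum>i\<in>UNIV. (x \<bullet> e i) *\<^sub>R e i)" and nx: "norm x = 1"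
    and by1: "\<And>i. b (e i) (e i) \<bullet> y = 0" and by2: "\<And>i. b x (e i) \<bullet> y = 0" and by3: "b x x \<bullet> y = 0"
    and yy: "y \<bullet> y = 1"
    and S: "(\<Sum>i\<in>UNIV. \<Sum>j\<in>UNIV. (norm (b (e i) (e j)))\<^sup>2) < (real CARD('k) - 4) / (sqrt (real CARD('k)) + 4)"
  shows "(\<Sum>\<beta>\<in>UNIV. 4 * ((b x (e \<beta>) - (x \<bullet> e \<beta>) *\<^sub>R y) \<bullet> (b x (e \<beta>) - (x \<bullet> e \<beta>) *\<^sub>R y))
            - (b x x - (x \<bullet> x) *\<^sub>R y) \<bullet> (b (e \<beta>) (e \<beta>) - (e \<beta> \<bullet> e \<beta>) *\<^sub>R y)) < 0"
proof -
  define k where "k = real CARD('k)"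
  define a where "a i = x \<bullet> e i" for i
  define Ssum where "Ssum = (\<Sum>i\<in>UNIV. \<Sum>j\<in>UNIV. (norm (b (e i) (e j)))\<^sup>2)"
  define R where "R = (\<Sum>\<beta>\<in>UNIV. (norm (b x (e \<beta>)))\<^sup>2)"
  define H where "H = (\<Sum>\<beta>\<in>UNIV. b (e \<beta>) (e \<beta>))"
  have xx: "x \<bullet> x = 1" using nx by (simp add: dot_square_norm)
  have ee: "e i \<bullet> e i = 1" for i using orth by simp
  have asum: "(\<Sum>i\<in>UNIV. (a i)\<^sup>2) = 1"
  proof -
    have "x \<bullet> x = x \<bullet> (\<Sum>i\<in>UNIV. (x \<bullet> e i) *\<^sub>R e i)" using xexp by simp
    also have "\<dots> = (\<Sum>i\<in>UNIV. (a i)\<^sup>2)" unfolding a_def by (simp add: inner_sum_right power2_eq_square)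
    finally show ?thesis using xx by simp
  qed
  have bx: "b x z = (\<Sum>i\<in>UNIV. a i *\<^sub>R b (e i) z)" for z
  proof -
    have "b x z = b (\<Sum>i\<in>UNIV. (x \<bullet> e i) *\<^sub>R e i) z" using xexp by simp
    also have "\<dots> = (\<Sum>i\<in>UNIV. a i *\<^sub>R b (e i) z)"
    proof -
      have "b (\<Sum>i\<in>UNIV. (x \<bullet> e i) *\<^sub>R e i) z = (\<Sum>i\<in>UNIV. b ((x \<bullet> e i) *\<^sub>R e i) z)"
        using linear_sum[OF lin1[of z], of "\<lambda>i. (x \<bullet> e i) *\<^sub>R e i" UNIV] by simp
      also have "\<dots> = (\<Sum>i\<in>UNIV. a i *\<^sub>R b (e i) z)"
        unfolding a_def using linear_scale[OF lin1[of z]] by simp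
      finally show ?thesis .
    qed
    finally show ?thesis .
  qed
  have bxx: "b x x = (\<Sum>i\<in>UNIV. a i *\<^sub>R b x (e i))"
  proof -
    have "b x x = b x (\<Sum>i\<in>UNIV. (x \<bullet> e i) *\<^sub>R e i)" using xexp by simp
    also have "\<dots> = (\<Sum>i\<in>UNIV. a i *\<^sub>R b x (e i))"
    proof -
      have "b x (\<Sum>i\<in>UNIV. (x \<bullet> e i) *\<^sub>R e i) = (\<Sum>i\<in>UNIV. b x ((x \<bullet> e i) *\<^sub>R e i))"
        using linear_sum[OF lin2[of x], of "\<lambda>i. (x \<bullet> e i) *\<^sub>R e i" UNIV] by simp
      also have "\<dots> = (\<Sum>i\<in>UNIV. a i *\<^sub>R b x (e i))"
        unfolding a_def using linear_scale[OF lin2[of x]] by simp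
      finally show ?thesis .
    qed
    finally show ?thesis .
  qed
  have RS: "R \<le> Ssum"
  proof -
    have "(norm (b x (e \<beta>)))\<^sup>2 \<le> (\<Sum>i\<in>UNIV. (norm (b (e i) (e \<beta>)))\<^sup>2)" for \<beta>
      using vec_cs[of a "\<lambda>i. b (e i) (e \<beta>)" UNIV] asum bx by simp
    then have "R \<le> (\<Sum>\<beta>\<in>UNIV. \<Sum>i\<in>UNIV. (norm (b (e i) (e \<beta>)))\<^sup>2)" unfolding R_def by (rule sum_mono)
    also have "\<dots> = Ssum" unfolding Ssum_def by (rule sum.swap)
    finally show ?thesis .
  qed
  have bxxR: "(norm (b x x))\<^sup>2 \<le> R"
    using vec_cs[of a "\<lambda>i. b x (e i)" UNIV] asum bxx unfolding R_def by simp
  have HS: "(norm H)\<^sup>2 \<le> k * Ssum"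
  proof -
    have "(norm H)\<^sup>2 \<le> (\<Sum>\<beta>\<in>(UNIV::'k set). 1\<^sup>2) * (\<Sum>\<beta>\<in>UNIV. (norm (b (e \<beta>) (e \<beta>)))\<^sup>2)"
      using vec_cs[of "\<lambda>_. 1" "\<lambda>\<beta>. b (e \<beta>) (e \<beta>)" UNIV] unfolding H_def by simp
    also have "\<dots> = k * (\<Sum>\<beta>\<in>UNIV. (norm (b (e \<beta>) (e \<beta>)))\<^sup>2)" unfolding k_def by simp
    also have "\<dots> \<le> k * Ssum"
    proof (rule mult_left_mono)
      show "(\<Sum>\<beta>\<in>UNIV. (norm (b (e \<beta>) (e \<beta>)))\<^sup>2) \<le> Ssum" unfolding Ssum_def
      proof (rule sum_mono)
        fix \<beta> :: 'k
        have "(norm (b (e \<beta>) (e \<beta>)))\<^sup>2 = (\<Sum>j\<in>{\<beta>}. (norm (b (e \<beta>) (e j)))\<^sup>2)" by simp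
        also have "\<dots> \<le> (\<Sum>j\<in>UNIV. (norm (b (e \<beta>) (e j)))\<^sup>2)" by (rule sum_mono2) auto
        finally show "(norm (b (e \<beta>) (e \<beta>)))\<^sup>2 \<le> (\<Sum>j\<in>UNIV. (norm (b (e \<beta>) (e j)))\<^sup>2)" .
      qed
    qed (simp add: k_def)
    finally show ?thesis .
  qed
  have S0: "Ssum \<ge> 0" unfolding Ssum_def by (intro sum_nonneg) auto
  have k0: "k \<ge> 0" unfolding k_def by simp
  have nbxx: "norm (b x x) \<le> sqrt Ssum"
    using bxxR RS by (metis order_trans norm_ge_zero real_le_rsqrt)
  have nH: "norm H \<le> sqrt k * sqrt Ssum"
    using HS by (metis norm_ge_zero real_le_rsqrt real_sqrt_mult)
  have dotH: "- (b x x \<bullet> H) \<le> sqrt k * Ssum"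
  proof -
    have "- (b x x \<bullet> H) \<le> norm (b x x) * norm H"
      using Cauchy_Schwarz_ineq2[of "b x x" H] by (simp add: abs_le_iff)
    also have "\<dots> \<le> sqrt Ssum * (sqrt k * sqrt Ssum)"
      using nbxx nH S0 by (intro mult_mono) auto
    also have "\<dots> = sqrt k * Ssum" using S0 by (simp add: algebra_simps)
    finally show ?thesis .
  qed
  have term1: "(b x (e \<beta>) - (x \<bullet> e \<beta>) *\<^sub>R y) \<bullet> (b x (e \<beta>) - (x \<bullet> e \<beta>) *\<^sub>R y) = (norm (b x (e \<beta>)))\<^sup>2 + (a \<beta>)\<^sup>2" for \<beta>
  proof -
    define u where "u = b x (e \<beta>)"
    define c where "c = x \<bullet> e \<beta>"
    have uy: "u \<bullet> y = 0" "y \<bullet> u = 0" using by2[of \<beta>] unfolding u_def by (simp_all add: inner_commute)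
    have "(u - c *\<^sub>R y) \<bullet> (u - c *\<^sub>R y) = u \<bullet> u - c * (u \<bullet> y) - c * (y \<bullet> u) + c * (c * (y \<bullet> y))"
      by (simp only: inner_diff_left inner_diff_right inner_scaleR_left inner_scaleR_right) (simp add: algebra_simps)
    also have "\<dots> = u \<bullet> u + c\<^sup>2" using uy yy by (simp add: power2_eq_square)
    finally show ?thesis unfolding u_def c_def a_def power2_norm_eq_inner .
  qed
  have term2: "(b x x - (x \<bullet> x) *\<^sub>R y) \<bullet> (b (e \<beta>) (e \<beta>) - (e \<beta> \<bullet> e \<beta>) *\<^sub>R y) = b x x \<bullet> b (e \<beta>) (e \<beta>) + 1" for \<beta>
    using by1[of \<beta>] by3 yy xx ee[of \<beta>]
    by (simp add: inner_diff_left inner_diff_right inner_commute)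
  have "(\<Sum>\<beta>\<in>UNIV. 4 * ((b x (e \<beta>) - (x \<bullet> e \<beta>) *\<^sub>R y) \<bullet> (b x (e \<beta>) - (x \<bullet> e \<beta>) *\<^sub>R y))
            - (b x x - (x \<bullet> x) *\<^sub>R y) \<bullet> (b (e \<beta>) (e \<beta>) - (e \<beta> \<bullet> e \<beta>) *\<^sub>R y))
      = (\<Sum>\<beta>\<in>UNIV. 4 * (norm (b x (e \<beta>)))\<^sup>2 + 4 * (a \<beta>)\<^sup>2 - b x x \<bullet> b (e \<beta>) (e \<beta>) - 1)"
    unfolding term1 term2 by (simp add: algebra_simps)
  also have "\<dots> = 4 * R + 4 * (\<Sum>\<beta>\<in>UNIV. (a \<beta>)\<^sup>2) - b x x \<bullet> H - k"
    unfolding R_def H_def k_def by (simp add: sum.distrib sum_subtractf sum_distrib_left inner_sum_right)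
  also have "\<dots> = 4 * R + 4 - b x x \<bullet> H - k" using asum by simp
  also have "\<dots> \<le> 4 * Ssum + 4 + sqrt k * Ssum - k" using RS dotH by linarith
  also have "\<dots> < 0"
  proof -
    have pos: "sqrt k + 4 > 0" using k0 by (simp add: add_nonneg_pos)
    have "Ssum * (sqrt k + 4) < k - 4" using S pos unfolding Ssum_def k_def by (simp add: pos_less_divide_eq)
    then show ?thesis by (simp add: algebra_simps)
  qed
  finally show ?thesis .
qed

definition padv :: "(nat \<Rightarrow> 'q::finite) \<Rightarrow> real^'q \<Rightarrow> nat \<Rightarrow> real" where
  "padv ix z = (\<lambda>i. if i < CARD('q) then z $ ix i else 0)"

lemma innerQ_pad:
  assumes ix: "bij_betw ix {..<CARD('q)} (UNIV::'q::finite set)"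
  shows "innerQ CARD('q) (padv ix a) (padv ix b) = a \<bullet> b"
proof -
  have "innerQ CARD('q) (padv ix a) (padv ix b) = (\<Sum>i<CARD('q). a $ ix i * b $ ix i)"
    unfolding innerQ_def padv_def by simp
  also have "\<dots> = (\<Sum>j\<in>UNIV. a $ j * b $ j)"
    using sum.reindex_bij_betw[OF ix, of "\<lambda>j. a $ j * b $ j"] by simp
  also have "\<dots> = a \<bullet> b" by (simp add: inner_vec_def)
  finally show ?thesis .
qed

lemma pad_diff: "(\<lambda>i. padv ix a i - padv ix b i) = padv ix (a - b)"
  by (auto simp: padv_def fun_eq_iff)

lemma pad_inj:
  assumes ix: "bij_betw ix {..<CARD('q)} (UNIV::'q::finite set)" and eq: "padv ix a = padv ix b"
  shows "a = b"
proof -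
  have "a $ j = b $ j" for j
  proof -
    have "j \<in> ix ` {..<CARD('q)}" using ix unfolding bij_betw_def by simp
    then obtain i where i: "i < CARD('q)" "ix i = j" by auto
    have "padv ix a i = padv ix b i" using eq by simp
    then show ?thesis using i unfolding padv_def by simp
  qed
  then show ?thesis by (simp add: vec_eq_iff)
qed

lemma pad_surj:
  assumes ix: "bij_betw ix {..<CARD('q)} (UNIV::'q::finite set)" and n: "\<forall>i\<ge>CARD('q). n i = 0"
  shows "\<exists>m. n = padv ix m"
proof
  define m :: "real^'q" where "m = (\<chi> j. n (inv_into {..<CARD('q)} ix j))"
  show "n = padv ix m"
  proof
    fix i show "n i = padv ix m i"
    proof (cases "i < CARD('q)")
      case True
      then have "inv_into {..<CARD('q)} ix (ix i) = i" using ix by (simp add: bij_betw_inv_into_left)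
      then show ?thesis using True unfolding padv_def m_def by simp
    next
      case False then show ?thesis using n unfolding padv_def by simp
    qed
  qed
qed

lemma perpQ_pad:
  assumes ix: "bij_betw ix {..<CARD('q)} (UNIV::'q::finite set)" and T: "subspace T"
  shows "perpQ CARD('q) (padv ix ` T) (padv ix z) = padv ix (Pr T z)"
  unfolding perpQ_def
proof (rule the_equality)
  show "(\<forall>i\<ge>CARD('q). padv ix (Pr T z) i = 0) \<and>
    (\<forall>s\<in>padv ix ` T. innerQ CARD('q) (padv ix (Pr T z)) s = 0) \<and>
    (\<lambda>i. padv ix z i - padv ix (Pr T z) i) \<in> padv ix ` T"
    using Pr_props[OF T] innerQ_pad[OF ix] unfolding pad_diff by (auto simp: padv_def)
  fix n assume n: "(\<forall>i\<ge>CARD('q). n i = 0) \<and> (\<forall>s\<in>padv ix ` T. innerQ CARD('q) n s = 0) \<and>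
         (\<lambda>i. padv ix z i - n i) \<in> padv ix ` T"
  obtain m where m: "n = padv ix m" using pad_surj[OF ix] n by blast
  obtain t where t: "t \<in> T" "padv ix (z - m) = padv ix t" using n unfolding m pad_diff by auto
  have zm: "z - m \<in> T" using pad_inj[OF ix t(2)] t(1) by simp
  have mo: "\<And>s. s \<in> T \<Longrightarrow> (z - (z - m)) \<bullet> s = 0" using n innerQ_pad[OF ix] unfolding m by auto
  have "z - m = closest_point T z" by (rule cp_unique[OF T zm mo])
  then have "Pr T z = m" unfolding Pr_def by (simp add: algebra_simps)
  then show "n = padv ix (Pr T z)" using m by simp
qed

lemma Ck_nth: "Ck_on n f U \<Longrightarrow> Ck_on n (\<lambda>u. f u $ j) U"
proof (induction n arbitrary: f)
  case 0 then show ?case by (simp add: continuous_on_component)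
next
  case (Suc n)
  then obtain f' where f': "\<forall>u\<in>U. (f has_derivative f' u) (at u)" and h: "\<forall>v. Ck_on n (\<lambda>u. f' u v) U"
    by auto
  have "\<forall>u\<in>U. ((\<lambda>u. f u $ j) has_derivative (\<lambda>v. f' u v $ j)) (at u)"
    using f' bounded_linear.has_derivative[OF bounded_linear_vec_nth] by blast
  moreover have "\<forall>v. Ck_on n (\<lambda>u. f' u v $ j) U" using h Suc.IH by blast
  ultimately show ?case by auto
qed

lemma smooth_nth: "smooth_on f U \<Longrightarrow> smooth_on (\<lambda>u. f u $ j) U"
  unfolding smooth_on_def using Ck_nth by blast

lemma fd_nth:
  assumes C: "C2 f f' f'' U" and u: "u \<in> U"
  shows "frechet_derivative (\<lambda>a. f a $ j) (at u) = (\<lambda>v. f' u v $ j)"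
proof -
  have "((\<lambda>a. f a $ j) has_derivative (\<lambda>v. f' u v $ j)) (at u)"
    using C u unfolding C2_def using bounded_linear.has_derivative[OF bounded_linear_vec_nth] by blast
  then show ?thesis using frechet_derivative_at by metis
qed

lemma d2_nth:
  assumes C: "C2 f f' f'' U" and u: "u \<in> U"
  shows "d2 (\<lambda>a. f a $ j) u v w = f'' u v w $ j"
proof -
  have o: "open U" using C unfolding C2_def by auto
  have "((\<lambda>a. f' a v $ j) has_derivative (\<lambda>w. f'' u v w $ j)) (at u)"
    using C u unfolding C2_def using bounded_linear.has_derivative[OF bounded_linear_vec_nth] by blast
  then have "((\<lambda>a. frechet_derivative (\<lambda>a. f a $ j) (at a) v) has_derivative (\<lambda>w. f'' u v w $ j)) (at u)"
    by (rule has_derivative_transform_within_open[OF _ o u]) (simp add: fd_nth[OF C])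
  then show ?thesis unfolding d2_def using frechet_derivative_at by metis
qed

lemma onb_expand:
  fixes e :: "'k::finite \<Rightarrow> 'v::real_inner"
  assumes orth: "\<And>i j. e i \<bullet> e j = (if i = j then 1 else 0)" and x: "x \<in> span (range e)"
  shows "x = (\<Sum>i\<in>UNIV. (x \<bullet> e i) *\<^sub>R e i)"
  using x
proof (induction rule: span_induct_alt)
  case base then show ?case by simp
next
  case (step c z w)
  then obtain j where j: "z = e j" by auto
  have ej: "(\<Sum>i\<in>UNIV. (e j \<bullet> e i) *\<^sub>R e i) = e j"
  proof -
    have "(\<Sum>i\<in>UNIV. (e j \<bullet> e i) *\<^sub>R e i) = (\<Sum>i\<in>UNIV. if i = j then e j else 0)"
      by (rule sum.cong) (auto simp: orth)
    then show ?thesis by simp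
  qed
  have "(\<Sum>i\<in>UNIV. ((c *\<^sub>R z + w) \<bullet> e i) *\<^sub>R e i) = c *\<^sub>R (\<Sum>i\<in>UNIV. (e j \<bullet> e i) *\<^sub>R e i) + (\<Sum>i\<in>UNIV. (w \<bullet> e i) *\<^sub>R e i)"
    unfolding j by (simp add: inner_add_left scaleR_add_left sum.distrib scaleR_sum_right)
  also have "\<dots> = c *\<^sub>R z + w" using ej step(2) j by simp
  finally show ?case by simp
qed

lemma const_deriv_zero:
  assumes d: "(g has_derivative g') (at a)" and o: "open U" and a: "a \<in> U" and c: "\<And>x. x \<in> U \<Longrightarrow> g x = k"
  shows "g' v = 0"
proof -
  have "((\<lambda>x. k) has_derivative g') (at a)"
    by (rule has_derivative_transform_within_open[OF d o a]) (simp add: c)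
  moreover have "((\<lambda>x. k) has_derivative (\<lambda>_. 0)) (at a)" by simp
  ultimately have "g' = (\<lambda>_. 0)" using has_derivative_unique by blast
  then show ?thesis by simp
qed

theorem theorem5p4:
  fixes N :: "(real^'q) set"
  assumes "CARD('k::finite) > 4"
    and "submanifold TYPE('k) N"
    and "compact N"
    and "N \<subseteq> sphere 0 1"
    and "\<forall>y\<in>N. \<forall>e. onb TYPE('k) N y e \<longrightarrow>
           sqnorm_sff_S TYPE('k) N y e < (real CARD('k) - 4) / (sqrt (real CARD('k)) + 4)"
  shows "Phi_SSU TYPE('k) N"
proof -
  obtain ix :: "nat \<Rightarrow> 'q" where ix: "bij_betw ix {..<CARD('q)} UNIV"
    using ex_bij_betw_nat_finite[of "UNIV::'q set"] by (auto simp: atLeast0LessThan)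
  define F where "F = padv ix"
  have dF_eq: "dF CARD('q) F \<phi> u v = padv ix (frechet_derivative \<phi> (at u) v)"
    if ch: "is_chart N U \<phi>" and u: "u \<in> U" for U :: "(real^'k) set" and \<phi> u v
  proof -
    obtain f' f'' W \<psi> where C: "C2 \<phi> f' f'' U" using chart_data[OF ch] by metis
    show ?thesis unfolding dF_def F_def
    proof (rule ext)
      fix i show "(if i < CARD('q) then frechet_derivative (\<lambda>u'. padv ix (\<phi> u') i) (at u) v else 0) =
          padv ix (frechet_derivative \<phi> (at u) v) i"
        by (cases "i < CARD('q)") (simp_all add: padv_def fd_nth[OF C u] C2_fd[OF C u])
    qed
  qed
  have d2F_eq: "d2F CARD('q) F \<phi> u v w = padv ix (d2 \<phi> u v w)"
    if ch: "is_chart N U \<phi>" and u: "u \<in> U" for U :: "(real^'k) set" and \<phi> u v w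
  proof -
    obtain f' f'' W \<psi> where C: "C2 \<phi> f' f'' U" using chart_data[OF ch] by metis
    show ?thesis unfolding d2F_def F_def
    proof (rule ext)
      fix i show "(if i < CARD('q) then d2 (\<lambda>u'. padv ix (\<phi> u') i) u v w else 0) =
          padv ix (d2 \<phi> u v w) i"
        by (cases "i < CARD('q)") (simp_all add: padv_def d2_nth[OF C u] C2_d2[OF C u])
    qed
  qed
  have iso: "isometric_immersion TYPE('k) N CARD('q) F"
    unfolding isometric_immersion_def
  proof (intro conjI allI impI ballI)
    show "\<And>y i. y \<in> N \<Longrightarrow> CARD('q) \<le> i \<Longrightarrow> F y i = 0" unfolding F_def padv_def by simp
    fix U :: "(real^'k) set" and \<phi> assume ch: "is_chart N U \<phi>"
    have sm: "smooth_on \<phi> U" using ch unfolding is_chart_def by auto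
    show "smooth_on (\<lambda>u. F (\<phi> u) i) U" if "i < CARD('q)" for i
      using smooth_nth[OF sm, of "ix i"] that unfolding F_def padv_def by simp
    fix u v w assume u: "u \<in> U"
    show "innerQ CARD('q) (dF CARD('q) F \<phi> u v) (dF CARD('q) F \<phi> u w) =
          frechet_derivative \<phi> (at u) v \<bullet> frechet_derivative \<phi> (at u) w"
      unfolding dF_eq[OF ch u] innerQ_pad[OF ix] ..
  qed
  show ?thesis unfolding Phi_SSU_def
  proof (intro exI[of _ "CARD('q)"] exI[of _ F] conjI ballI impI allI)
    show "isometric_immersion TYPE('k) N CARD('q) F" by (rule iso)
    fix y x e
    assume yN: "y \<in> N" and xT: "x \<in> tangent_space TYPE('k) N y" and nx: "norm x = 1"
      and onb: "onb TYPE('k) N y e"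
    obtain U0 :: "(real^'k) set" and \<phi>0 where ch0: "is_chart N U0 \<phi>0" and yim: "y \<in> \<phi>0 ` U0"
      using assms(2) yN unfolding submanifold_def by blast
    obtain u0 where u0: "u0 \<in> U0" and y0: "\<phi>0 u0 = y" using yim by auto
    obtain f0' f0'' W0 \<psi>0 where C0: "C2 \<phi>0 f0' f0'' U0" and inj0: "\<And>u. u \<in> U0 \<Longrightarrow> inj (f0' u)"
      and H0: "homeomorphism U0 (N \<inter> W0) \<phi>0 \<psi>0"
      using chart_data[OF ch0] by metis
    define T where "T = tangent_space TYPE('k) N y"
    have Teq: "T = range (f0' u0)" unfolding T_def tangent_eq[OF ch0 u0 y0] C2_fd[OF C0 u0] ..
    have Tsub: "subspace T" unfolding T_def by (rule tangent_subspace[OF ch0 u0 y0])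
    obtain G0 where G0: "linear G0" "G0 \<circ> f0' u0 = id"
      using linear_injective_left_inverse[OF C2_lin1[OF C0 u0] inj0[OF u0]] by blast
    have GX: "f0' u0 (G0 X) = X" if X: "X \<in> T" for X
    proof -
      obtain a where "X = f0' u0 a" using X Teq by auto
      then show ?thesis using G0(2) by (metis comp_apply id_apply)
    qed
    define Bf where "Bf X Y = Pr T (f0'' u0 (G0 X) (G0 Y))" for X Y
    have key: "Pr T (d2 \<phi> u v w) = Bf X Y"
      if ch: "is_chart N U \<phi>" and u: "u \<in> U" and yu: "\<phi> u = y" and X: "X \<in> T" and Y: "Y \<in> T"
        and vX: "frechet_derivative \<phi> (at u) v = X" and wY: "frechet_derivative \<phi> (at u) w = Y"
      for U :: "(real^'k) set" and \<phi> u v w X Y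
    proof -
      have "Pr T (d2 \<phi> u v w) = Pr T (d2 \<phi>0 u0 (G0 X) (G0 Y))" unfolding T_def
        by (rule B_agree[OF ch u yu ch0 u0 y0]) (simp_all add: vX wY C2_fd[OF C0 u0] GX X Y)
      then show ?thesis unfolding Bf_def C2_d2[OF C0 u0] .
    qed
    have sffR: "sff_R TYPE('k) N y X Y = Bf X Y" if X: "X \<in> T" and Y: "Y \<in> T" for X Y
      unfolding sff_R_def
    proof (rule some_equality)
      show "\<exists>(U::(real^'k) set) \<phi> u v w. is_chart N U \<phi> \<and> u \<in> U \<and> \<phi> u = y \<and>
          frechet_derivative \<phi> (at u) v = X \<and> frechet_derivative \<phi> (at u) w = Y \<and>
          Bf X Y = d2 \<phi> u v w - closest_point (tangent_space TYPE('k) N y) (d2 \<phi> u v w)"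
        apply (rule exI[of _ U0], rule exI[of _ \<phi>0], rule exI[of _ u0], rule exI[of _ "G0 X"], rule exI[of _ "G0 Y"])
        using ch0 u0 y0 GX X Y C2_fd[OF C0 u0] C2_d2[OF C0 u0] unfolding Bf_def Pr_def T_def by simp
      fix b assume "\<exists>(U::(real^'k) set) \<phi> u v w. is_chart N U \<phi> \<and> u \<in> U \<and> \<phi> u = y \<and>
          frechet_derivative \<phi> (at u) v = X \<and> frechet_derivative \<phi> (at u) w = Y \<and>
          b = d2 \<phi> u v w - closest_point (tangent_space TYPE('k) N y) (d2 \<phi> u v w)"
      then obtain U :: "(real^'k) set" and \<phi> u v w where w: "is_chart N U \<phi>" "u \<in> U" "\<phi> u = y"
          "frechet_derivative \<phi> (at u) v = X" "frechet_derivative \<phi> (at u) w = Y"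
          "b = d2 \<phi> u v w - closest_point (tangent_space TYPE('k) N y) (d2 \<phi> u v w)" by blast
      have "b = Pr T (d2 \<phi> u v w)" using w(6) unfolding Pr_def T_def .
      then show "b = Bf X Y" using key[OF w(1-3) X Y w(4,5)] by simp
    qed
    have perp_eq: "perpQ CARD('q) (range (dF CARD('q) F \<phi> u)) (d2F CARD('q) F \<phi> u v w) = padv ix (Pr T (d2 \<phi> u v w))"
      if ch: "is_chart N U \<phi>" and u: "u \<in> U" and yu: "\<phi> u = y" for U :: "(real^'k) set" and \<phi> u v w
    proof -
      have "range (dF CARD('q) F \<phi> u) = padv ix ` T"
        unfolding T_def tangent_eq[OF ch u yu] using dF_eq[OF ch u] by (auto simp: image_iff)
      then show ?thesis unfolding d2F_eq[OF ch u] using perpQ_pad[OF ix Tsub] by simp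
    qed
    have sffF: "sff_F TYPE('k) N CARD('q) F y X Y = padv ix (Bf X Y)" if X: "X \<in> T" and Y: "Y \<in> T" for X Y
      unfolding sff_F_def
    proof (rule some_equality)
      show "\<exists>(U::(real^'k) set) \<phi> u v w. is_chart N U \<phi> \<and> u \<in> U \<and> \<phi> u = y \<and>
          frechet_derivative \<phi> (at u) v = X \<and> frechet_derivative \<phi> (at u) w = Y \<and>
          padv ix (Bf X Y) = perpQ CARD('q) (range (dF CARD('q) F \<phi> u)) (d2F CARD('q) F \<phi> u v w)"
        apply (rule exI[of _ U0], rule exI[of _ \<phi>0], rule exI[of _ u0], rule exI[of _ "G0 X"], rule exI[of _ "G0 Y"])
        using ch0 u0 y0 GX X Y C2_fd[OF C0 u0] C2_d2[OF C0 u0] perp_eq[OF ch0 u0 y0] unfolding Bf_def by simp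
      fix b assume "\<exists>(U::(real^'k) set) \<phi> u v w. is_chart N U \<phi> \<and> u \<in> U \<and> \<phi> u = y \<and>
          frechet_derivative \<phi> (at u) v = X \<and> frechet_derivative \<phi> (at u) w = Y \<and>
          b = perpQ CARD('q) (range (dF CARD('q) F \<phi> u)) (d2F CARD('q) F \<phi> u v w)"
      then obtain U :: "(real^'k) set" and \<phi> u v w where w: "is_chart N U \<phi>" "u \<in> U" "\<phi> u = y"
          "frechet_derivative \<phi> (at u) v = X" "frechet_derivative \<phi> (at u) w = Y"
          "b = perpQ CARD('q) (range (dF CARD('q) F \<phi> u)) (d2F CARD('q) F \<phi> u v w)" by blast
      show "b = padv ix (Bf X Y)" using w(6) perp_eq[OF w(1-3)] key[OF w(1-3) X Y w(4,5)] by simp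
    qed
    have o0: "open U0" using C0 unfolding C2_def by auto
    have on: "\<phi>0 a \<bullet> \<phi>0 a = 1" if "a \<in> U0" for a
    proof -
      have "\<phi>0 a \<in> N" using H0 that unfolding homeomorphism_def by auto
      then have "norm (\<phi>0 a) = 1" using assms(4) by auto
      then show ?thesis by (simp add: norm_eq_1)
    qed
    have tang0: "f0' a v \<bullet> \<phi>0 a = 0" if a: "a \<in> U0" for a v
    proof -
      have d: "(\<phi>0 has_derivative f0' a) (at a)" using C0 a unfolding C2_def by auto
      have "((\<lambda>x. \<phi>0 x \<bullet> \<phi>0 x) has_derivative (\<lambda>h. \<phi>0 a \<bullet> f0' a h + f0' a h \<bullet> \<phi>0 a)) (at a)"
        by (rule has_derivative_inner[OF d d])
      from const_deriv_zero[OF this o0 a on] have "\<phi>0 a \<bullet> f0' a v + f0' a v \<bullet> \<phi>0 a = 0" .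
      then show ?thesis by (simp add: inner_commute)
    qed
    have sec0: "f0'' u0 v w \<bullet> y = - (f0' u0 v \<bullet> f0' u0 w)" for v w
    proof -
      have d1: "((\<lambda>a. f0' a v) has_derivative f0'' u0 v) (at u0)" using C0 u0 unfolding C2_def by auto
      have d: "(\<phi>0 has_derivative f0' u0) (at u0)" using C0 u0 unfolding C2_def by auto
      have "((\<lambda>x. f0' x v \<bullet> \<phi>0 x) has_derivative (\<lambda>h. f0' u0 v \<bullet> f0' u0 h + f0'' u0 v h \<bullet> \<phi>0 u0)) (at u0)"
        by (rule has_derivative_inner[OF d1 d])
      from const_deriv_zero[OF this o0 u0 tang0] have "f0' u0 v \<bullet> f0' u0 w + f0'' u0 v w \<bullet> \<phi>0 u0 = 0" .
      then show ?thesis using y0 by simp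
    qed
    have Ty: "t \<bullet> y = 0" if "t \<in> T" for t
      using that Teq tang0[OF u0] y0 by auto
    have yy: "y \<bullet> y = 1" using on[OF u0] y0 by simp
    have Bfy: "Bf X Y \<bullet> y = - (X \<bullet> Y)" if X: "X \<in> T" and Y: "Y \<in> T" for X Y
    proof -
      define D where "D = f0'' u0 (G0 X) (G0 Y)"
      have "Bf X Y \<bullet> y = D \<bullet> y - closest_point T D \<bullet> y" unfolding Bf_def Pr_def D_def by (simp add: inner_diff_left)
      also have "closest_point T D \<bullet> y = 0" using Ty cp_props(1)[OF Tsub] by blast
      also have "D \<bullet> y = - (X \<bullet> Y)" unfolding D_def sec0 GX[OF X] GX[OF Y] ..
      finally show ?thesis by simp
    qed
    define b1 where "b1 X Y = Bf X Y + (X \<bullet> Y) *\<^sub>R y" for X Y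
    have Bfb1: "Bf X Y = b1 X Y - (X \<bullet> Y) *\<^sub>R y" for X Y unfolding b1_def by simp
    have sffS: "sff_S TYPE('k) N y X Y = b1 X Y" if X: "X \<in> T" and Y: "Y \<in> T" for X Y
      unfolding sff_S_def sffR[OF X Y] Bfy[OF X Y] b1_def by simp
    have b1y: "b1 X Y \<bullet> y = 0" if X: "X \<in> T" and Y: "Y \<in> T" for X Y
      unfolding b1_def using Bfy[OF X Y] yy by (simp add: inner_add_left)
    have linPr: "linear (Pr T)" using Pr_props(1)[OF Tsub] .
    have lin1: "linear (\<lambda>X. b1 X Y)" for Y
      by (rule linearI) (simp_all add: b1_def Bf_def linear_add[OF G0(1)] linear_scale[OF G0(1)]
          linear_add[OF C2_lin3[OF C0 u0]] linear_scale[OF C2_lin3[OF C0 u0]]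
          linear_add[OF linPr] linear_scale[OF linPr] inner_add_left scaleR_add_left algebra_simps)
    have lin2: "linear (b1 X)" for X
      by (rule linearI) (simp_all add: b1_def Bf_def linear_add[OF G0(1)] linear_scale[OF G0(1)]
          linear_add[OF C2_lin2[OF C0 u0]] linear_scale[OF C2_lin2[OF C0 u0]]
          linear_add[OF linPr] linear_scale[OF linPr] inner_add_right scaleR_add_left algebra_simps)
    have eT: "e i \<in> T" for i using onb unfolding onb_def T_def by auto
    have orth: "e i \<bullet> e j = (if i = j then 1 else 0)" for i j using onb unfolding onb_def by auto
    have spanT: "span (range e) = T" using onb unfolding onb_def T_def by auto
    have xT': "x \<in> T" using xT unfolding T_def .
    have xexp: "x = (\<Sum>i\<in>UNIV. (x \<bullet> e i) *\<^sub>R e i)" using onb_expand[OF orth] xT' spanT by auto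
    have S: "(\<Sum>i\<in>UNIV. \<Sum>j\<in>UNIV. (norm (b1 (e i) (e j)))\<^sup>2) < (real CARD('k) - 4) / (sqrt (real CARD('k)) + 4)"
    proof -
      have "(\<Sum>i\<in>UNIV. \<Sum>j\<in>UNIV. (norm (sff_S TYPE('k) N y (e i) (e j)))\<^sup>2) < (real CARD('k) - 4) / (sqrt (real CARD('k)) + 4)"
        using assms(5) yN onb unfolding sqnorm_sff_S_def by blast
      then show ?thesis unfolding sffS[OF eT eT] .
    qed
    have "(\<Sum>\<beta>\<in>UNIV. 4 * innerQ CARD('q) (sff_F TYPE('k) N CARD('q) F y x (e \<beta>)) (sff_F TYPE('k) N CARD('q) F y x (e \<beta>)) -
             innerQ CARD('q) (sff_F TYPE('k) N CARD('q) F y x x) (sff_F TYPE('k) N CARD('q) F y (e \<beta>) (e \<beta>)))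
        = (\<Sum>\<beta>\<in>UNIV. 4 * ((b1 x (e \<beta>) - (x \<bullet> e \<beta>) *\<^sub>R y) \<bullet> (b1 x (e \<beta>) - (x \<bullet> e \<beta>) *\<^sub>R y))
            - (b1 x x - (x \<bullet> x) *\<^sub>R y) \<bullet> (b1 (e \<beta>) (e \<beta>) - (e \<beta> \<bullet> e \<beta>) *\<^sub>R y))"
      by (rule sum.cong) (simp_all add: sffF[OF xT' eT] sffF[OF xT' xT'] sffF[OF eT eT] innerQ_pad[OF ix] Bfb1)
    also have "\<dots> < 0"
      by (rule final_alg[OF lin1 lin2 orth xexp nx b1y[OF eT eT] b1y[OF xT' eT] b1y[OF xT' xT'] yy S])
    finally show "(\<Sum>\<beta>\<in>UNIV. 4 * innerQ CARD('q) (sff_F TYPE('k) N CARD('q) F y x (e \<beta>)) (sff_F TYPE('k) N CARD('q) F y x (e \<beta>)) -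
             innerQ CARD('q) (sff_F TYPE('k) N CARD('q) F y x x) (sff_F TYPE('k) N CARD('q) F y (e \<beta>) (e \<beta>))) < 0" .
  qed
qed

end
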